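(* Let $\mu$ be an isotropic $1$-unconditional log-concave probability measure on $\mathbb{R}^n$ with continuous density $f$. Then for every convex set $A\subset\mathbb{R}^n$ and every $\epsilon>0$, $$\mu\big((A+\epsilon B_2^n)\setminus A\big)\leq \sqrt{2}\,n\,\epsilon.$$ Consequently $\mu^+(\partial A)\leq\sqrt{2}\,n$ for every convex set $A$, and $\Gamma(\mu)\leq \sqrt{2}\,n$.
   Context: A probability measure on $\mathbb{R}^n$ is log-concave if it has a density $f$ with $\ln f$ concave; isotropic means barycenter $0$ and identity covariance matrix; $1$-unconditional means $f(x_1,\dots,x_n)=f(\epsilon_1x_1,\dots,\epsilon_nx_n)$ for all $\epsilon_i\in\{-1,1\}$. $B_2^n$ is the Euclidean unit ball. $\mu^+(\partial A)=\liminf_{\epsilon\to0^+}\frac{\mu((A+\epsilon B_2^n)\setminus A)}{\epsilon}$ and $\Gamma(\mu)=\sup\{\mu^+(\partial A): A \text{ a convex body (compact convex set with nonempty interior)}\}$. *)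

theory Defs
  imports "HOL-Analysis.Analysis"
begin

definition log_concave_fun :: "('a::real_vector \<Rightarrow> real) \<Rightarrow> bool" where
  "log_concave_fun f \<longleftrightarrow> (\<forall>x. 0 \<le> f x) \<and>
     (\<forall>x y t. 0 < t \<and> t < 1 \<longrightarrow>
        f x powr (1 - t) * f y powr t \<le> f ((1 - t) *\<^sub>R x + t *\<^sub>R y))"

definition prob_density :: "(real^'n \<Rightarrow> real) \<Rightarrow> bool" where
  "prob_density f \<longleftrightarrow> (\<forall>x. 0 \<le> f x) \<and> integrable lebesgue f \<and>
     (LINT x|lebesgue. f x) = 1"

definition dens_measure :: "(real^'n \<Rightarrow> real) \<Rightarrow> (real^'n) measure" where
  "dens_measure f = density lebesgue (\<lambda>x. ennreal (f x))"

definition isotropic_density :: "(real^'n \<Rightarrow> real) \<Rightarrow> bool" where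
  "isotropic_density f \<longleftrightarrow>
     (\<forall>i. integrable lebesgue (\<lambda>x. x $ i * f x) \<and> (LINT x|lebesgue. x $ i * f x) = 0) \<and>
     (\<forall>i j. integrable lebesgue (\<lambda>x. x $ i * x $ j * f x) \<and>
        (LINT x|lebesgue. x $ i * x $ j * f x) = (if i = j then 1 else 0))"

definition unconditional_density :: "(real^'n \<Rightarrow> real) \<Rightarrow> bool" where
  "unconditional_density f \<longleftrightarrow>
     (\<forall>x (s :: 'n \<Rightarrow> real). (\<forall>i. s i \<in> {-1, 1}) \<longrightarrow> f (\<chi> i. s i * x $ i) = f x)"

definition eps_nbhd :: "(real^'n) set \<Rightarrow> real \<Rightarrow> (real^'n) set" where
  "eps_nbhd A e = {a + b | a b. a \<in> A \<and> b \<in> cball 0 e}"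

definition boundary_measure :: "(real^'n) measure \<Rightarrow> (real^'n) set \<Rightarrow> ereal" where
  "boundary_measure \<mu> A =
     Liminf (at_right 0) (\<lambda>e. ereal (measure \<mu> (eps_nbhd A e - A) / e))"

definition convex_body :: "(real^'n) set \<Rightarrow> bool" where
  "convex_body A \<longleftrightarrow> compact A \<and> convex A \<and> interior A \<noteq> {}"

definition Gamma_measure :: "(real^'n) measure \<Rightarrow> ereal" where
  "Gamma_measure \<mu> = (SUP A \<in> {A. convex_body A}. boundary_measure \<mu> A)"

end

theory Submission
  imports Defs "HOL-Probability.Probability"
begin

definition qc :: "(real \<Rightarrow> ennreal) \<Rightarrow> bool" where
  "qc g \<longleftrightarrow> (\<forall>r::real. convex {t. ennreal r < g t})"

lemma qc_measurable:
  assumes "qc g" shows "g \<in> borel_measurable borel"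
proof (rule borel_measurableI_greater)
  fix y :: ennreal
  show "{x \<in> space borel. y < g x} \<in> sets borel"
  proof (cases y rule: ennreal_cases)
    case (real r)
    have "convex {t. ennreal r < g t}" using assms qc_def by blast
    then have "{t. ennreal r < g t} \<in> sets borel"
      by (intro real_interval_borel_measurable) (simp add: is_interval_convex_1)
    then show ?thesis using real by simp
  next
    case top
    then show ?thesis by simp
  qed
qed

lemma ennreal_unbounded_top:
  fixes x :: ennreal
  assumes "\<And>n::nat. ennreal (real n) \<le> x" shows "x = \<top>"
proof (cases x rule: ennreal_cases)
  case (real y)
  obtain n :: nat where "y < real n" using reals_Archimedean2 by blast
  with assms[of n] real show ?thesis by (simp add: ennreal_le_iff2 not_le[symmetric])
qed simp

lemma ennreal_unbounded_top_real:
  fixes x :: ennreal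
  assumes "\<And>N::real. 0 \<le> N \<Longrightarrow> ennreal N \<le> x" shows "x = \<top>"
  using assms by (intro ennreal_unbounded_top) auto

lemma emeasure_Ioi_top: "emeasure lborel {(a::real)<..} = \<top>"
proof (rule ennreal_unbounded_top_real)
  fix N :: real assume "0 \<le> N"
  have "ennreal N = emeasure lborel {a+1..a+1+N}" using \<open>0 \<le> N\<close> by simp
  also have "\<dots> \<le> emeasure lborel {a<..}" by (rule emeasure_mono) auto
  finally show "ennreal N \<le> emeasure lborel {a<..}" .
qed

lemma layer_cake:
  fixes g :: "real \<Rightarrow> ennreal" and K :: real
  assumes g[measurable]: "g \<in> borel_measurable borel" and K: "0 < K"
  shows "(\<integral>\<^sup>+ x. g x \<partial>lborel) = ennreal K *
     (\<integral>\<^sup>+ r. emeasure lborel {x. ennreal (K * r) < g x} * indicator {0<..} r \<partial>lborel)"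
proof -
  have pt: "g x = ennreal K * emeasure lborel {r. 0 < r \<and> ennreal (K * r) < g x}" for x
  proof (cases "g x" rule: ennreal_cases)
    case (real v)
    have "{r. 0 < r \<and> ennreal (K * r) < g x} = {0<..<v/K}"
      using K real by (auto simp: ennreal_less_iff field_simps)
    moreover have "ennreal K * ennreal (v / K) = ennreal v"
      using K real by (simp add: ennreal_mult[symmetric])
    ultimately show ?thesis using real K by auto
  next
    case top
    then have "{r. 0 < r \<and> ennreal (K * r) < g x} = {0<..}" by auto
    then show ?thesis using top K by (simp add: ennreal_mult_top emeasure_Ioi_top)
  qed
  have "(\<integral>\<^sup>+ x. g x \<partial>lborel) = (\<integral>\<^sup>+ x. ennreal K * (\<integral>\<^sup>+ r. indicator {r. 0 < r \<and> ennreal (K * r) < g x} r \<partial>lborel) \<partial>lborel)"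
    by (subst pt) (simp add: nn_integral_indicator)
  also have "\<dots> = ennreal K * (\<integral>\<^sup>+ x. (\<integral>\<^sup>+ r. indicator {r. 0 < r \<and> ennreal (K * r) < g x} r \<partial>lborel) \<partial>lborel)"
    by (rule nn_integral_cmult) measurable
  also have "(\<integral>\<^sup>+ x. (\<integral>\<^sup>+ r. indicator {r. 0 < r \<and> ennreal (K * r) < g x} r \<partial>lborel) \<partial>lborel)
     = (\<integral>\<^sup>+ r. (\<integral>\<^sup>+ x. indicator {r. 0 < r \<and> ennreal (K * r) < g x} r \<partial>lborel) \<partial>lborel)"
    by (rule lborel_pair.Fubini'[symmetric]) measurable
  also have "\<dots> = (\<integral>\<^sup>+ r. emeasure lborel {x. ennreal (K * r) < g x} * indicator {0<..} r \<partial>lborel)"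
  proof (rule nn_integral_cong)
    fix r :: real
    have "(\<lambda>x. indicator {r. 0 < r \<and> ennreal (K * r) < g x} r :: ennreal) =
      (\<lambda>x. indicator {0<..} r * indicator {x. ennreal (K * r) < g x} x)"
      by (auto simp: fun_eq_iff split: split_indicator)
    then show "(\<integral>\<^sup>+ x. indicator {r. 0 < r \<and> ennreal (K * r) < g x} r \<partial>lborel) =
      emeasure lborel {x. ennreal (K * r) < g x} * indicator {0<..} r"
      by (simp add: nn_integral_cmult mult.commute)
  qed
  finally show ?thesis .
qed

lemma convex_real_between:
  fixes S :: "real set"
  assumes "convex S" "a \<in> S" "b \<in> S" "a \<le> x" "x \<le> b" shows "x \<in> S"
proof -
  have "is_interval S" using assms(1) by (simp add: is_interval_convex_1)
  then have "\<forall>a\<in>S. \<forall>b\<in>S. \<forall>x. a \<le> x \<and> x \<le> b \<longrightarrow> x \<in> S" by (simp only: is_interval_1)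
  then show ?thesis using assms(2-5) by blast
qed

lemma convex_real_borel: "convex (S::real set) \<Longrightarrow> S \<in> sets borel"
  by (intro real_interval_borel_measurable) (simp add: is_interval_convex_1)

lemma interval_meas_ge:
  fixes T :: "real set"
  assumes "convex T" "a \<in> T" "b \<in> T" "a \<le> b"
  shows "ennreal (b - a) \<le> emeasure lborel T"
proof -
  have "{a..b} \<subseteq> T" using convex_real_between[OF assms(1,2,3)] by auto
  then have "emeasure lborel {a..b} \<le> emeasure lborel T"
    using convex_real_borel[OF assms(1)] by (intro emeasure_mono) auto
  then show ?thesis using assms by simp
qed

lemma conv_bdd_meas:
  fixes S :: "real set"
  assumes "convex S" "S \<noteq> {}" "bdd_above S" "bdd_below S"
  shows "emeasure lborel S = ennreal (Sup S - Inf S)"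
proof (rule antisym)
  have "S \<subseteq> {Inf S..Sup S}" using assms by (auto intro: cInf_lower cSup_upper)
  then have "emeasure lborel S \<le> emeasure lborel {Inf S..Sup S}"
    by (intro emeasure_mono) auto
  then show "emeasure lborel S \<le> ennreal (Sup S - Inf S)"
    using assms by (simp add: cInf_le_cSup)
next
  have "{Inf S<..<Sup S} \<subseteq> S"
  proof
    fix t assume t: "t \<in> {Inf S<..<Sup S}"
    then obtain a where "a \<in> S" "a < t" using assms by (auto simp: cInf_less_iff)
    moreover obtain b where "b \<in> S" "t < b" using assms t by (auto simp: less_cSup_iff)
    ultimately show "t \<in> S" using convex_real_between[OF assms(1), of a b t] by simp
  qed
  then have "emeasure lborel {Inf S<..<Sup S} \<le> emeasure lborel S"
    using convex_real_borel[OF assms(1)] by (intro emeasure_mono) auto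
  then show "ennreal (Sup S - Inf S) \<le> emeasure lborel S"
    using assms by (simp add: cInf_le_cSup)
qed

lemma conv_approx_bdd:
  fixes S :: "real set"
  assumes "S \<noteq> {}" "bdd_above S" "bdd_below S" "0 < e"
  shows "\<exists>a\<in>S. \<exists>b\<in>S. a \<le> b \<and> Sup S - Inf S - e \<le> b - a"
proof -
  have "Inf S < Inf S + e/2" using assms by simp
  then obtain a where a: "a \<in> S" "a < Inf S + e/2" using cInf_less_iff[OF assms(1,3)] by blast
  have "Sup S - e/2 < Sup S" using assms by simp
  then obtain b where b: "b \<in> S" "Sup S - e/2 < b" using less_cSup_iff[OF assms(1,2)] by blast
  show ?thesis
  proof (cases "a \<le> b")
    case True then show ?thesis using a b by (intro bexI[of _ a] bexI[of _ b]) auto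
  next
    case False then show ?thesis using a b by (intro bexI[of _ b] bexI[of _ a]) auto
  qed
qed

lemma conv_unbdd:
  fixes S :: "real set"
  assumes "S \<noteq> {}" "\<not> (bdd_above S \<and> bdd_below S)"
  shows "\<exists>a\<in>S. \<exists>b\<in>S. a \<le> b \<and> N \<le> b - a"
proof -
  obtain c where c: "c \<in> S" using assms by auto
  show ?thesis
  proof (cases "bdd_above S")
    case False
    then obtain b where "b \<in> S" "c + \<bar>N\<bar> < b" unfolding bdd_above_def by (meson not_le)
    then show ?thesis using c by (intro bexI[of _ c] bexI[of _ b]) auto
  next
    case True
    then have "\<not> bdd_below S" using assms by auto
    then obtain a where "a \<in> S" "a < c - \<bar>N\<bar>" unfolding bdd_below_def by (meson not_le)
    then show ?thesis using c by (intro bexI[of _ a] bexI[of _ c]) auto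
  qed
qed

lemma BM1:
  fixes S0 S1 T :: "real set"
  assumes l: "0 < l" "l < 1" and cv: "convex S0" "convex S1" "convex T"
    and ne: "S0 \<noteq> {}" "S1 \<noteq> {}"
    and mix: "\<And>a b. a \<in> S0 \<Longrightarrow> b \<in> S1 \<Longrightarrow> (1-l)*a + l*b \<in> T"
  shows "ennreal (1-l) * emeasure lborel S0 + ennreal l * emeasure lborel S1 \<le> emeasure lborel T"
proof -
  have key: "ennreal ((1-l)*(b0-a0) + l*(b1-a1)) \<le> emeasure lborel T"
    if "a0 \<in> S0" "b0 \<in> S0" "a1 \<in> S1" "b1 \<in> S1" "a0 \<le> b0" "a1 \<le> b1" for a0 b0 a1 b1
  proof -
    have "(1-l)*a0 + l*a1 \<le> (1-l)*b0 + l*b1"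
      using that l by (intro add_mono mult_left_mono) auto
    from interval_meas_ge[OF cv(3) mix[OF that(1,3)] mix[OF that(2,4)] this]
    show ?thesis by (simp add: algebra_simps)
  qed
  show ?thesis
  proof (cases "bdd_above S0 \<and> bdd_below S0 \<and> bdd_above S1 \<and> bdd_below S1")
    case True
    then have m0: "emeasure lborel S0 = ennreal (Sup S0 - Inf S0)"
      and m1: "emeasure lborel S1 = ennreal (Sup S1 - Inf S1)"
      using conv_bdd_meas cv ne by auto
    have d0: "0 \<le> Sup S0 - Inf S0" "0 \<le> Sup S1 - Inf S1"
      using True ne by (auto simp: cInf_le_cSup)
    have "ennreal ((1-l) * (Sup S0 - Inf S0) + l * (Sup S1 - Inf S1)) \<le> emeasure lborel T"
    proof (rule ennreal_le_epsilon)
      fix e :: real assume "0 < e"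
      have "\<exists>a\<in>S0. \<exists>b\<in>S0. a \<le> b \<and> Sup S0 - Inf S0 - e \<le> b - a"
        using conv_approx_bdd[of S0 e] True ne \<open>0 < e\<close> by simp
      then obtain a0 b0 where ab0: "a0 \<in> S0" "b0 \<in> S0" "a0 \<le> b0" "Sup S0 - Inf S0 - e \<le> b0 - a0"
        by blast
      have "\<exists>a\<in>S1. \<exists>b\<in>S1. a \<le> b \<and> Sup S1 - Inf S1 - e \<le> b - a"
        using conv_approx_bdd[of S1 e] True ne \<open>0 < e\<close> by simp
      then obtain a1 b1 where ab1: "a1 \<in> S1" "b1 \<in> S1" "a1 \<le> b1" "Sup S1 - Inf S1 - e \<le> b1 - a1"
        by blast
      have "(1-l) * (Sup S0 - Inf S0) + l * (Sup S1 - Inf S1) \<le> ((1-l)*(b0-a0) + l*(b1-a1)) + e"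
      proof -
        have "(1-l) * (Sup S0 - Inf S0 - e) \<le> (1-l)*(b0-a0)" using ab0 l by (intro mult_left_mono) auto
        moreover have "l * (Sup S1 - Inf S1 - e) \<le> l*(b1-a1)" using ab1 l by (intro mult_left_mono) auto
        ultimately show ?thesis by (simp add: algebra_simps)
      qed
      then have "ennreal ((1-l) * (Sup S0 - Inf S0) + l * (Sup S1 - Inf S1)) \<le> ennreal ((1-l)*(b0-a0) + l*(b1-a1)) + ennreal e"
      proof -
        have nn: "0 \<le> (1-l)*(b0-a0) + l*(b1-a1)" using ab0 ab1 l by simp
        have "ennreal ((1-l) * (Sup S0 - Inf S0) + l * (Sup S1 - Inf S1)) \<le> ennreal (((1-l)*(b0-a0) + l*(b1-a1)) + e)"
          using \<open>(1-l) * (Sup S0 - Inf S0) + l * (Sup S1 - Inf S1) \<le> ((1-l)*(b0-a0) + l*(b1-a1)) + e\<close> by (rule ennreal_leI)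
        also have "\<dots> = ennreal ((1-l)*(b0-a0) + l*(b1-a1)) + ennreal e"
          by (rule ennreal_plus[OF nn]) (use \<open>0 < e\<close> in simp)
        finally show ?thesis .
      qed
      also have "\<dots> \<le> emeasure lborel T + ennreal e"
        using key[OF ab0(1,2) ab1(1,2) ab0(3) ab1(3)] by (rule add_right_mono)
      finally show "ennreal ((1-l) * (Sup S0 - Inf S0) + l * (Sup S1 - Inf S1)) \<le> emeasure lborel T + ennreal e" .
    qed
    moreover have "ennreal (1-l) * emeasure lborel S0 + ennreal l * emeasure lborel S1
       = ennreal ((1-l) * (Sup S0 - Inf S0) + l * (Sup S1 - Inf S1))"
    proof -
      have "ennreal (1-l) * emeasure lborel S0 = ennreal ((1-l) * (Sup S0 - Inf S0))"
        unfolding m0 using l d0 by (intro ennreal_mult[symmetric]) auto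
      moreover have "ennreal l * emeasure lborel S1 = ennreal (l * (Sup S1 - Inf S1))"
        unfolding m1 using l d0 by (intro ennreal_mult[symmetric]) auto
      moreover have "ennreal ((1-l) * (Sup S0 - Inf S0)) + ennreal (l * (Sup S1 - Inf S1)) = ennreal ((1-l) * (Sup S0 - Inf S0) + l * (Sup S1 - Inf S1))"
        using l d0 by (intro ennreal_plus[symmetric]) auto
      ultimately show ?thesis by simp
    qed
    ultimately show ?thesis by simp
  next
    case False
    have "emeasure lborel T = \<top>"
    proof (rule ennreal_unbounded_top_real)
      fix N :: real assume N: "0 \<le> N"
      show "ennreal N \<le> emeasure lborel T"
      proof (cases "bdd_above S0 \<and> bdd_below S0")
        case False
        obtain a0 b0 where ab0: "a0 \<in> S0" "b0 \<in> S0" "a0 \<le> b0" "N/(1-l) \<le> b0 - a0"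
          using conv_unbdd[OF ne(1) False] by blast
        obtain c where c: "c \<in> S1" using ne by auto
        have "(1-l)*(N/(1-l)) \<le> (1-l)*(b0-a0)" using ab0(4) l by (intro mult_left_mono) auto
        then have "N \<le> (1-l)*(b0-a0) + l*(c-c)" using l by simp
        then have "ennreal N \<le> ennreal ((1-l)*(b0-a0) + l*(c-c))" by (rule ennreal_leI)
        also have "\<dots> \<le> emeasure lborel T" using key[OF ab0(1,2) c c ab0(3)] by simp
        finally show ?thesis .
      next
        case True
        with False have F: "\<not> (bdd_above S1 \<and> bdd_below S1)" by auto
        obtain a1 b1 where ab1: "a1 \<in> S1" "b1 \<in> S1" "a1 \<le> b1" "N/l \<le> b1 - a1"
          using conv_unbdd[OF ne(2) F] by blast
        obtain c where c: "c \<in> S0" using ne by auto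
        have "l*(N/l) \<le> l*(b1-a1)" using ab1(4) l by (intro mult_left_mono) auto
        then have "N \<le> (1-l)*(c-c) + l*(b1-a1)" using l by simp
        then have "ennreal N \<le> ennreal ((1-l)*(c-c) + l*(b1-a1))" by (rule ennreal_leI)
        also have "\<dots> \<le> emeasure lborel T" using key[OF c c ab1(1,2) _ ab1(3)] by simp
        finally show ?thesis .
      qed
    qed
    then show ?thesis by simp
  qed
qed

lemma meas_levelfun:
  fixes g :: "real \<Rightarrow> ennreal"
  assumes [measurable]: "g \<in> borel_measurable borel"
  shows "(\<lambda>r. emeasure lborel {t. ennreal (c * r) < g t}) \<in> borel_measurable borel"
proof -
  have Q: "{p \<in> space (lborel \<Otimes>\<^sub>M lborel). ennreal (c * fst p) < g (snd p)} \<in> sets (lborel \<Otimes>\<^sub>M lborel)"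
    by measurable
  have "(\<lambda>r. emeasure lborel (Pair r -` {p \<in> space (lborel \<Otimes>\<^sub>M lborel). ennreal (c * fst p) < g (snd p)}))
      \<in> borel_measurable lborel"
    by (rule lborel.measurable_emeasure_Pair[OF Q])
  moreover have "\<And>r. Pair r -` {p \<in> space (lborel \<Otimes>\<^sub>M lborel). ennreal (c * fst p) < g (snd p)} = {t. ennreal (c * r) < g t}"
    by (auto simp: space_pair_measure)
  ultimately show ?thesis by simp
qed

lemma powr_mix_eq:
  fixes x :: real assumes "0 \<le> x"
  shows "x powr (1-l) * x powr l = x"
proof (cases "x = 0")
  case False
  have "x powr (1-l) * x powr l = x powr ((1-l) + l)" by (simp only: powr_add)
  then show ?thesis using False assms by simp
qed simp

lemma PL1_bounded:
  fixes f0 f1 h :: "real \<Rightarrow> ennreal"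
  assumes l: "0 < l" "l < 1" and q: "qc f0" "qc f1" "qc h"
    and hyp: "\<And>a b u v. 0 \<le> u \<Longrightarrow> 0 \<le> v \<Longrightarrow> ennreal u \<le> f0 a \<Longrightarrow> ennreal v \<le> f1 b \<Longrightarrow>
       ennreal (u powr (1-l) * v powr l) \<le> h ((1-l)*a + l*b)"
    and bnd0: "\<And>t. f0 t \<le> ennreal C0" and bnd1: "\<And>t. f1 t \<le> ennreal C1"
    and u: "0 < u" "ennreal u \<le> (\<integral>\<^sup>+t. f0 t \<partial>lborel)"
    and v: "0 < v" "ennreal v \<le> (\<integral>\<^sup>+t. f1 t \<partial>lborel)"
  shows "ennreal (u powr (1-l) * v powr l) \<le> (\<integral>\<^sup>+t. h t \<partial>lborel)"
proof -
  note m0[measurable] = qc_measurable[OF q(1)]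
  note m1[measurable] = qc_measurable[OF q(2)]
  note mh[measurable] = qc_measurable[OF q(3)]
  have supfact: "\<exists>M>0. (\<forall>t. f t \<le> ennreal M) \<and> (\<forall>r. 0 < r \<longrightarrow> r < 1 \<longrightarrow> (\<exists>t. ennreal (M * r) < f t))"
    if bnd: "\<And>t. f t \<le> ennreal C" and pos: "0 < (\<integral>\<^sup>+t. f t \<partial>lborel)" for f :: "real \<Rightarrow> ennreal" and C
  proof -
    have "(SUP t. f t) \<le> ennreal C" using bnd by (rule SUP_least)
    then obtain M where M: "(SUP t. f t) = ennreal M" "0 \<le> M"
      by (cases "(SUP t. f t)" rule: ennreal_cases) (auto simp: top_unique)
    have le: "f t \<le> ennreal M" for t using M(1)[symmetric] by (simp add: SUP_upper)
    have "M > 0"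
    proof (rule ccontr)
      assume "\<not> 0 < M"
      then have "f t = 0" for t using le[of t] M(2) by (simp add: ennreal_eq_0_iff)
      then show False using pos by simp
    qed
    moreover have "\<exists>t. ennreal (M * r) < f t" if "0 < r" "r < 1" for r
    proof -
      have "ennreal (M * r) < ennreal M" using that \<open>M > 0\<close> by (simp add: ennreal_less_iff)
      then show ?thesis unfolding M(1)[symmetric] by (simp add: less_SUP_iff)
    qed
    ultimately show ?thesis using le by blast
  qed
  have pos0: "0 < (\<integral>\<^sup>+t. f0 t \<partial>lborel)" using u by (metis ennreal_less_zero_iff less_le_trans)
  have pos1: "0 < (\<integral>\<^sup>+t. f1 t \<partial>lborel)" using v by (metis ennreal_less_zero_iff less_le_trans)
  obtain M0 where M0: "M0 > 0" "\<And>t. f0 t \<le> ennreal M0" "\<And>r. 0 < r \<Longrightarrow> r < 1 \<Longrightarrow> \<exists>t. ennreal (M0 * r) < f0 t"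
    using supfact[OF bnd0 pos0] by blast
  obtain M1 where M1: "M1 > 0" "\<And>t. f1 t \<le> ennreal M1" "\<And>r. 0 < r \<Longrightarrow> r < 1 \<Longrightarrow> \<exists>t. ennreal (M1 * r) < f1 t"
    using supfact[OF bnd1 pos1] by blast
  define K where "K = M0 powr (1-l) * M1 powr l"
  have K: "K > 0" unfolding K_def using M0 M1 by simp
  define A0 where "A0 r = emeasure lborel {t. ennreal (M0 * r) < f0 t}" for r
  define A1 where "A1 r = emeasure lborel {t. ennreal (M1 * r) < f1 t}" for r
  define H where "H r = emeasure lborel {t. ennreal (K * r) < h t}" for r
  have mA0[measurable]: "A0 \<in> borel_measurable borel" unfolding A0_def by (rule meas_levelfun) simp
  have mA1[measurable]: "A1 \<in> borel_measurable borel" unfolding A1_def by (rule meas_levelfun) simp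
  have mH[measurable]: "H \<in> borel_measurable borel" unfolding H_def by (rule meas_levelfun) simp
  have A0_1: "A0 r * indicator {0<..} r = A0 r * indicator {0<..<1} r" for r
  proof (cases "1 \<le> r")
    case True
    have "{t. ennreal (M0 * r) < f0 t} = {}"
    proof -
      have "ennreal M0 \<le> ennreal (M0 * r)" using True M0 by (intro ennreal_leI) simp
      then show ?thesis using M0(2) by (auto dest: le_less_trans order.strict_trans1)
    qed
    then show ?thesis using True by (simp add: A0_def)
  qed (auto split: split_indicator)
  have A1_1: "A1 r * indicator {0<..} r = A1 r * indicator {0<..<1} r" for r
  proof (cases "1 \<le> r")
    case True
    have "{t. ennreal (M1 * r) < f1 t} = {}"
    proof -
      have "ennreal M1 \<le> ennreal (M1 * r)" using True M1 by (intro ennreal_leI) simp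
      then show ?thesis using M1(2) by (auto dest: le_less_trans order.strict_trans1)
    qed
    then show ?thesis using True by (simp add: A1_def)
  qed (auto split: split_indicator)
  have BMr: "ennreal (1-l) * A0 r + ennreal l * A1 r \<le> H r" if r: "0 < r" "r < 1" for r
    unfolding A0_def A1_def H_def
  proof (rule BM1[OF l])
    show "convex {t. ennreal (M0 * r) < f0 t}" using q(1) by (simp add: qc_def)
    show "convex {t. ennreal (M1 * r) < f1 t}" using q(2) by (simp add: qc_def)
    show "convex {t. ennreal (K * r) < h t}" using q(3) by (simp add: qc_def)
    show "{t. ennreal (M0 * r) < f0 t} \<noteq> {}" using M0(3)[OF r] by auto
    show "{t. ennreal (M1 * r) < f1 t} \<noteq> {}" using M1(3)[OF r] by auto
    fix a b assume a: "a \<in> {t. ennreal (M0 * r) < f0 t}" and b: "b \<in> {t. ennreal (M1 * r) < f1 t}"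
    define ua where "ua = enn2real (f0 a)"
    define vb where "vb = enn2real (f1 b)"
    have fa: "f0 a = ennreal ua" unfolding ua_def using M0(2)[of a]
      by (metis enn2real_le_iff ennreal_enn2real_if ennreal_less_top le_less_trans not_top_less)
    have fb: "f1 b = ennreal vb" unfolding vb_def using M1(2)[of b]
      by (metis enn2real_le_iff ennreal_enn2real_if ennreal_less_top le_less_trans not_top_less)
    have "0 \<le> ua" unfolding ua_def by simp
    moreover have "ennreal (M0 * r) < ennreal ua" using a by (simp add: fa)
    then have "M0 * r < ua" using M0 r by (subst (asm) ennreal_less_iff) auto
    ultimately have ua: "M0 * r < ua" "0 \<le> ua" by auto
    have "0 \<le> vb" unfolding vb_def by simp
    moreover have "ennreal (M1 * r) < ennreal vb" using b by (simp add: fb)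
    then have "M1 * r < vb" using M1 r by (subst (asm) ennreal_less_iff) auto
    ultimately have vb: "M1 * r < vb" "0 \<le> vb" by auto
    have "K * r = (M0 * r) powr (1-l) * (M1 * r) powr l"
    proof -
      have "(M0 * r) powr (1-l) * (M1 * r) powr l = (M0 powr (1-l) * M1 powr l) * (r powr (1-l) * r powr l)"
        using M0 M1 r by (simp add: powr_mult)
      also have "r powr (1-l) * r powr l = r" using r by (simp add: powr_mix_eq)
      finally show ?thesis by (simp add: K_def)
    qed
    also have "\<dots> < ua powr (1-l) * vb powr l"
    proof -
      have p0: "0 \<le> M0 * r" "0 \<le> M1 * r" using M0(1) M1(1) r by auto
      have a1: "(M0*r) powr (1-l) < ua powr (1-l)"
        by (rule powr_less_mono2) (use l ua p0 in auto)
      have a2: "(M1*r) powr l < vb powr l"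
        by (rule powr_less_mono2) (use l vb p0 in auto)
      have "0 < ua powr (1-l)" using ua p0 by auto
      then show ?thesis using mult_strict_mono[OF a1 a2] by simp
    qed
    finally have lt: "K * r < ua powr (1-l) * vb powr l" .
    have "ennreal (K * r) < ennreal (ua powr (1-l) * vb powr l)"
      using lt K r by (subst ennreal_less_iff) auto
    also have "\<dots> \<le> h ((1-l)*a + l*b)" using hyp[of ua vb a b] ua vb fa fb by simp
    finally show "(1-l)*a + l*b \<in> {t. ennreal (K * r) < h t}" by simp
  qed
  define I0 where "I0 = (\<integral>\<^sup>+r. A0 r * indicator {0<..} r \<partial>lborel)"
  define I1 where "I1 = (\<integral>\<^sup>+r. A1 r * indicator {0<..} r \<partial>lborel)"
  have int0: "(\<integral>\<^sup>+t. f0 t \<partial>lborel) = ennreal M0 * I0"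
    unfolding I0_def A0_def by (rule layer_cake[OF m0 M0(1)])
  have int1: "(\<integral>\<^sup>+t. f1 t \<partial>lborel) = ennreal M1 * I1"
    unfolding I1_def A1_def by (rule layer_cake[OF m1 M1(1)])
  have inth: "(\<integral>\<^sup>+t. h t \<partial>lborel) = ennreal K * (\<integral>\<^sup>+r. H r * indicator {0<..} r \<partial>lborel)"
    unfolding H_def by (rule layer_cake[OF mh K])
  have I0: "ennreal (u / M0) \<le> I0"
  proof -
    have "ennreal M0 * ennreal (u / M0) = ennreal u" using M0 u by (simp add: ennreal_mult[symmetric])
    then have "ennreal M0 * ennreal (u / M0) \<le> ennreal M0 * I0" using u int0 by simp
    then show ?thesis using M0 by (simp add: ennreal_mult_le_mult_iff)
  qed
  have I1: "ennreal (v / M1) \<le> I1"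
  proof -
    have "ennreal M1 * ennreal (v / M1) = ennreal v" using M1 v by (simp add: ennreal_mult[symmetric])
    then have "ennreal M1 * ennreal (v / M1) \<le> ennreal M1 * I1" using v int1 by simp
    then show ?thesis using M1 by (simp add: ennreal_mult_le_mult_iff)
  qed
  have "ennreal (1-l) * I0 + ennreal l * I1 =
      (\<integral>\<^sup>+r. (ennreal (1-l) * A0 r + ennreal l * A1 r) * indicator {0<..<1} r \<partial>lborel)"
  proof -
    have "(\<integral>\<^sup>+r. (ennreal (1-l) * A0 r + ennreal l * A1 r) * indicator {0<..<1} r \<partial>lborel)
      = (\<integral>\<^sup>+r. ennreal (1-l) * (A0 r * indicator {0<..<1} r) + ennreal l * (A1 r * indicator {0<..<1} r) \<partial>lborel)"
      by (intro nn_integral_cong) (simp add: distrib_right mult.assoc)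
    also have "\<dots> = (\<integral>\<^sup>+r. ennreal (1-l) * (A0 r * indicator {0<..<1} r) \<partial>lborel) + (\<integral>\<^sup>+r. ennreal l * (A1 r * indicator {0<..<1} r) \<partial>lborel)"
      by (rule nn_integral_add) measurable
    also have "\<dots> = ennreal (1-l) * (\<integral>\<^sup>+r. A0 r * indicator {0<..<1} r \<partial>lborel) + ennreal l * (\<integral>\<^sup>+r. A1 r * indicator {0<..<1} r \<partial>lborel)"
      by (simp add: nn_integral_cmult)
    also have "(\<integral>\<^sup>+r. A0 r * indicator {0<..<1} r \<partial>lborel) = I0" unfolding I0_def by (simp add: A0_1)
    also have "(\<integral>\<^sup>+r. A1 r * indicator {0<..<1} r \<partial>lborel) = I1" unfolding I1_def by (simp add: A1_1)
    finally show ?thesis by simp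
  qed
  also have "\<dots> \<le> (\<integral>\<^sup>+r. H r * indicator {0<..} r \<partial>lborel)"
    by (intro nn_integral_mono) (auto split: split_indicator intro: BMr)
  finally have main: "ennreal (1-l) * I0 + ennreal l * I1 \<le> (\<integral>\<^sup>+r. H r * indicator {0<..} r \<partial>lborel)" .
  have "ennreal ((1-l) * (u/M0) + l * (v/M1)) = ennreal (1-l) * ennreal (u / M0) + ennreal l * ennreal (v / M1)"
  proof -
    have "ennreal ((1-l) * (u/M0) + l * (v/M1)) = ennreal ((1-l) * (u/M0)) + ennreal (l * (v/M1))"
      using l u v M0 M1 by (intro ennreal_plus) auto
    moreover have "ennreal ((1-l) * (u/M0)) = ennreal (1-l) * ennreal (u / M0)"
      using l u M0 by (intro ennreal_mult) auto
    moreover have "ennreal (l * (v/M1)) = ennreal l * ennreal (v / M1)"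
      using l v M1 by (intro ennreal_mult) auto
    ultimately show ?thesis by simp
  qed
  also have "\<dots> \<le> ennreal (1-l) * I0 + ennreal l * I1"
    by (intro add_mono mult_left_mono I0 I1) auto
  finally have amgm: "ennreal ((1-l) * (u/M0) + l * (v/M1)) \<le> (\<integral>\<^sup>+r. H r * indicator {0<..} r \<partial>lborel)"
    using main by simp
  have young: "(u/M0) powr (1-l) * (v/M1) powr l \<le> (1-l) * (u/M0) + l * (v/M1)"
    using Youngs_inequality_0[of "1-l" l "u/M0" "v/M1"] l u v M0 M1 by simp
  have eq: "u powr (1-l) * v powr l = K * ((u/M0) powr (1-l) * (v/M1) powr l)"
    using u v M0 M1 by (simp add: K_def powr_divide field_simps)
  have "ennreal (u powr (1-l) * v powr l) \<le> ennreal (K * ((1-l) * (u/M0) + l * (v/M1)))"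
    unfolding eq using young K by (intro ennreal_leI mult_left_mono) auto
  also have "\<dots> = ennreal K * ennreal ((1-l) * (u/M0) + l * (v/M1))"
    using K l u v M0 M1 by (intro ennreal_mult) auto
  also have "\<dots> \<le> ennreal K * (\<integral>\<^sup>+r. H r * indicator {0<..} r \<partial>lborel)"
    by (intro mult_left_mono amgm) auto
  also have "\<dots> = (\<integral>\<^sup>+t. h t \<partial>lborel)" using inth by simp
  finally show ?thesis .
qed

lemma qc_min: "qc f \<Longrightarrow> qc (\<lambda>t. min (f t) c)"
  unfolding qc_def
proof
  fix r assume "\<forall>r. convex {t. ennreal r < f t}"
  then have "convex ({t. ennreal r < f t} \<inter> (if ennreal r < c then UNIV else {}))"
    by (intro convex_Int) auto
  moreover have "{t. ennreal r < min (f t) c} = {t. ennreal r < f t} \<inter> (if ennreal r < c then UNIV else {})"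
    by auto
  ultimately show "convex {t. ennreal r < min (f t) c}" by simp
qed

lemma ennreal_le_by_scale:
  assumes "\<And>th. 0 < th \<Longrightarrow> th < 1 \<Longrightarrow> ennreal (th * X) \<le> Z" "0 \<le> X"
  shows "ennreal X \<le> Z"
proof (cases Z rule: ennreal_cases)
  case (real z)
  have "X \<le> z"
  proof (rule field_le_mult_one_interval)
    fix th :: real assume "0 < th" "th < 1"
    then show "th * X \<le> z" using assms(1)[of th] real assms(2) by (auto simp add: ennreal_le_iff2)
  qed
  then show ?thesis using real by (simp add: ennreal_leI)
qed simp

lemma trunc_approx:
  fixes f :: "real \<Rightarrow> ennreal"
  assumes [measurable]: "f \<in> borel_measurable borel" and "ennreal w < (\<integral>\<^sup>+t. f t \<partial>lborel)"
  shows "\<exists>n::nat. ennreal w < (\<integral>\<^sup>+t. min (f t) (of_nat n) \<partial>lborel)"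
proof -
  have "(\<integral>\<^sup>+t. f t \<partial>lborel) = (\<integral>\<^sup>+t. (SUP n. min (f t) (of_nat n)) \<partial>lborel)"
  proof (intro nn_integral_cong)
    fix t
    have "(SUP n. min (f t) (of_nat n)) = min (f t) (SUP n. of_nat n :: ennreal)"
      using inf_SUP[of "f t" "\<lambda>n. of_nat n" UNIV] by (simp add: inf_min)
    then show "f t = (SUP n. min (f t) (of_nat n))" by (simp add: ennreal_SUP_of_nat_eq_top)
  qed
  also have "\<dots> = (SUP n. (\<integral>\<^sup>+t. min (f t) (of_nat n) \<partial>lborel))"
  proof (rule nn_integral_monotone_convergence_SUP)
    show "incseq (\<lambda>n t. min (f t) (of_nat n :: ennreal))"
    proof (unfold incseq_def le_fun_def, intro allI impI)
      fix m n :: nat and t assume "m \<le> n"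
      then have "(of_nat m :: ennreal) \<le> of_nat n" by simp
      then show "min (f t) (of_nat m) \<le> min (f t) (of_nat n)" by (rule min.mono[OF order.refl])
    qed
  qed measurable
  finally show ?thesis using assms(2) by (simp add: less_SUP_iff)
qed

lemma PL1:
  fixes f0 f1 h :: "real \<Rightarrow> ennreal"
  assumes l: "0 < l" "l < 1" and q: "qc f0" "qc f1" "qc h"
    and hyp: "\<And>a b u v. 0 \<le> u \<Longrightarrow> 0 \<le> v \<Longrightarrow> ennreal u \<le> f0 a \<Longrightarrow> ennreal v \<le> f1 b \<Longrightarrow>
       ennreal (u powr (1-l) * v powr l) \<le> h ((1-l)*a + l*b)"
    and u: "0 \<le> u" "ennreal u \<le> (\<integral>\<^sup>+t. f0 t \<partial>lborel)"
    and v: "0 \<le> v" "ennreal v \<le> (\<integral>\<^sup>+t. f1 t \<partial>lborel)"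
  shows "ennreal (u powr (1-l) * v powr l) \<le> (\<integral>\<^sup>+t. h t \<partial>lborel)"
proof (cases "u = 0 \<or> v = 0")
  case True then show ?thesis by auto
next
  case False
  then have up: "0 < u" and vp: "0 < v" using u v by auto
  note m0[measurable] = qc_measurable[OF q(1)]
  note m1[measurable] = qc_measurable[OF q(2)]
  show ?thesis
  proof (rule ennreal_le_by_scale)
    fix s0 :: real assume s0: "0 < s0" "s0 < 1"
    have "ennreal (s0 * u) < ennreal u" using s0 up by (simp add: ennreal_less_iff)
    then obtain n :: nat where n: "ennreal (s0 * u) < (\<integral>\<^sup>+t. min (f0 t) (of_nat n) \<partial>lborel)"
      using trunc_approx[OF m0] u by (meson order.strict_trans2)
    have "ennreal (s0 * v) < ennreal v" using s0 vp by (simp add: ennreal_less_iff)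
    then obtain m :: nat where m: "ennreal (s0 * v) < (\<integral>\<^sup>+t. min (f1 t) (of_nat m) \<partial>lborel)"
      using trunc_approx[OF m1] v by (meson order.strict_trans2)
    have "ennreal ((s0 * u) powr (1-l) * (s0 * v) powr l) \<le> (\<integral>\<^sup>+t. h t \<partial>lborel)"
    proof (rule PL1_bounded[OF l qc_min[OF q(1)] qc_min[OF q(2)] q(3)])
      fix a b u' v' :: real assume "0 \<le> u'" "0 \<le> v'" "ennreal u' \<le> min (f0 a) (of_nat n)" "ennreal v' \<le> min (f1 b) (of_nat m)"
      then show "ennreal (u' powr (1-l) * v' powr l) \<le> h ((1-l)*a + l*b)" using hyp by simp
    next
      show "min (f0 t) (of_nat n) \<le> ennreal (real n)" for t by (simp add: ennreal_of_nat_eq_real_of_nat)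
      show "min (f1 t) (of_nat m) \<le> ennreal (real m)" for t by (simp add: ennreal_of_nat_eq_real_of_nat)
      show "0 < s0 * u" "0 < s0 * v" using s0 up vp by auto
      show "ennreal (s0 * u) \<le> (\<integral>\<^sup>+t. min (f0 t) (of_nat n) \<partial>lborel)" using n by simp
      show "ennreal (s0 * v) \<le> (\<integral>\<^sup>+t. min (f1 t) (of_nat m) \<partial>lborel)" using m by simp
    qed
    moreover have "(s0 * u) powr (1-l) * (s0 * v) powr l = s0 * (u powr (1-l) * v powr l)"
    proof -
      have "(s0 * u) powr (1-l) * (s0 * v) powr l = (s0 powr (1-l) * s0 powr l) * (u powr (1-l) * v powr l)"
        using s0 up vp by (simp add: powr_mult)
      also have "s0 powr (1-l) * s0 powr l = s0" using s0 by (simp add: powr_mix_eq)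
      finally show ?thesis .
    qed
    ultimately show "ennreal (s0 * (u powr (1-l) * v powr l)) \<le> (\<integral>\<^sup>+t. h t \<partial>lborel)" by simp
  qed (use up vp in auto)
qed

definition Phi :: "('a::euclidean_space \<Rightarrow> real) \<Rightarrow> 'a" where
  "Phi g = (\<Sum>b\<in>Basis. g b *\<^sub>R b)"

definition lcE :: "(('a \<Rightarrow> real) \<Rightarrow> ennreal) \<Rightarrow> bool" where
  "lcE F \<longleftrightarrow> (\<forall>x y l u v. 0 < l \<longrightarrow> l < 1 \<longrightarrow> 0 \<le> u \<longrightarrow> 0 \<le> v \<longrightarrow> ennreal u \<le> F x \<longrightarrow> ennreal v \<le> F y \<longrightarrow>
      ennreal (u powr (1-l) * v powr l) \<le> F (\<lambda>b. (1-l) * x b + l * y b))"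

definition Gm :: "('a::euclidean_space \<Rightarrow> real) \<Rightarrow> 'a set \<Rightarrow> ('a \<Rightarrow> real) \<Rightarrow> ennreal" where
  "Gm f J x = (\<integral>\<^sup>+z. ennreal (f (Phi (\<lambda>b. if b \<in> J then z b else x b))) \<partial>(PiM J (\<lambda>_. lborel)))"

lemma Phi_mix: "Phi (\<lambda>b. (1-l) * x b + l * y b) = (1-l) *\<^sub>R Phi x + l *\<^sub>R Phi y"
  unfolding Phi_def by (simp add: scaleR_add_left sum.distrib scaleR_sum_right)

lemma Phi_split:
  fixes J :: "'a::euclidean_space set"
  assumes "J \<subseteq> Basis"
  shows "Phi (\<lambda>b. if b \<in> J then z b else x b) = (\<Sum>b\<in>J. z b *\<^sub>R b) + (\<Sum>b\<in>Basis - J. x b *\<^sub>R b)"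
proof -
  have "Basis = J \<union> (Basis - J)" using assms by auto
  then have "Phi (\<lambda>b. if b \<in> J then z b else x b) =
     (\<Sum>b\<in>J. (if b \<in> J then z b else x b) *\<^sub>R b) + (\<Sum>b\<in>Basis - J. (if b \<in> J then z b else x b) *\<^sub>R b)"
  proof -
    have "finite J" by (rule finite_subset[OF assms finite_Basis])
    then have "(\<Sum>b\<in>J \<union> (Basis - J). (if b \<in> J then z b else x b) *\<^sub>R b) =
      (\<Sum>b\<in>J. (if b \<in> J then z b else x b) *\<^sub>R b) + (\<Sum>b\<in>Basis - J. (if b \<in> J then z b else x b) *\<^sub>R b)"
      by (intro sum.union_disjoint) auto
    then show ?thesis unfolding Phi_def using \<open>Basis = J \<union> (Basis - J)\<close> by simp
  qed
  also have "\<dots> = (\<Sum>b\<in>J. z b *\<^sub>R b) + (\<Sum>b\<in>Basis - J. x b *\<^sub>R b)"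
    by (intro arg_cong2[where f="(+)"] sum.cong) auto
  finally show ?thesis .
qed

lemma meas_Gm_integrand:
  fixes f :: "'a::euclidean_space \<Rightarrow> real"
  assumes f: "continuous_on UNIV f" and J: "J \<subseteq> Basis"
  shows "(\<lambda>z. ennreal (f (Phi (\<lambda>b. if b \<in> J then z b else x b)))) \<in> borel_measurable (PiM J (\<lambda>_. lborel))"
proof -
  have fm[measurable]: "f \<in> borel_measurable borel" by (rule borel_measurable_continuous_onI[OF f])
  have "(\<lambda>z. (\<Sum>b\<in>J. z b *\<^sub>R b) + (\<Sum>b\<in>Basis - J. x b *\<^sub>R b)) \<in> borel_measurable (PiM J (\<lambda>_. lborel))"
    by measurable
  then have "(\<lambda>z. Phi (\<lambda>b. if b \<in> J then z b else x b)) \<in> borel_measurable (PiM J (\<lambda>_. lborel))"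
    by (simp add: Phi_split[OF J])
  then show ?thesis by measurable
qed

lemma Gm_empty: "Gm f {} x = ennreal (f (Phi x))"
  unfolding Gm_def PiM_empty by (simp add: nn_integral_count_space_finite)

lemma Gm_insert:
  fixes f :: "'a::euclidean_space \<Rightarrow> real"
  assumes f: "continuous_on UNIV f" and J: "insert j J \<subseteq> Basis" and j: "j \<notin> J"
  shows "Gm f (insert j J) x = (\<integral>\<^sup>+t. Gm f J (x(j := t)) \<partial>lborel)"
proof -
  interpret product_sigma_finite "\<lambda>_. lborel" by standard
  have fin: "finite J" by (rule finite_subset[OF _ finite_Basis]) (use J in auto)
  have "Gm f (insert j J) x = (\<integral>\<^sup>+t. (\<integral>\<^sup>+z. ennreal (f (Phi (\<lambda>b. if b \<in> insert j J then (z(j := t)) b else x b))) \<partial>(PiM J (\<lambda>_. lborel))) \<partial>lborel)"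
    unfolding Gm_def
    by (rule product_nn_integral_insert_rev[OF fin j meas_Gm_integrand[OF f J]])
  also have "\<dots> = (\<integral>\<^sup>+t. Gm f J (x(j := t)) \<partial>lborel)"
  proof -
    have "(\<lambda>b. if b \<in> insert j J then (z(j := t)) b else x b) = (\<lambda>b. if b \<in> J then z b else (x(j := t)) b)" for z t
      using j by (auto simp: fun_eq_iff)
    then show ?thesis unfolding Gm_def by simp
  qed
  finally show ?thesis .
qed

lemma qc_of_lcE:
  assumes "lcE F" shows "qc (\<lambda>t. F (x(j := t)))"
  unfolding qc_def
proof
  fix r :: real
  show "convex {t. ennreal r < F (x(j := t))}"
  proof (rule convexI)
    fix a b u v :: real
    assume a: "a \<in> {t. ennreal r < F (x(j := t))}" and b: "b \<in> {t. ennreal r < F (x(j := t))}"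
      and uv: "0 \<le> u" "0 \<le> v" "u + v = 1"
    show "u *\<^sub>R a + v *\<^sub>R b \<in> {t. ennreal r < F (x(j := t))}"
    proof (cases "u = 0 \<or> v = 0")
      case True
      then show ?thesis using a b uv by auto
    next
      case False
      then have v: "0 < v" "v < 1" using uv by auto
      have "ennreal r < min (F (x(j := a))) (F (x(j := b)))" using a b by simp
      then obtain y where y: "ennreal r < y" "y < min (F (x(j := a))) (F (x(j := b)))"
        using dense by blast
      then obtain w where w: "y = ennreal w" "0 \<le> w"
        by (cases y rule: ennreal_cases) auto
      have "ennreal (w powr (1-v) * w powr v) \<le> F (\<lambda>c. (1-v) * (x(j := a)) c + v * (x(j := b)) c)"
        using assms w y v unfolding lcE_def by (metis less_imp_le min.strict_boundedE)
      moreover have "(\<lambda>c. (1-v) * (x(j := a)) c + v * (x(j := b)) c) = x(j := u *\<^sub>R a + v *\<^sub>R b)"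
      proof -
        have u: "u = 1 - v" using uv by simp
        show ?thesis unfolding u by (auto simp: fun_eq_iff algebra_simps)
      qed
      moreover have "w powr (1-v) * w powr v = w" using w by (simp add: powr_mix_eq)
      ultimately have "ennreal w \<le> F (x(j := u *\<^sub>R a + v *\<^sub>R b))" by simp
      then show ?thesis using y w by auto
    qed
  qed
qed

lemma prekopa:
  fixes f :: "'a::euclidean_space \<Rightarrow> real"
  assumes f: "continuous_on UNIV f" and lc: "log_concave_fun f"
  shows "J \<subseteq> Basis \<Longrightarrow> lcE (Gm f J)"
proof (induction J rule: infinite_finite_induct)
  case (infinite J)
  then show ?case using finite_subset[OF _ finite_Basis] by auto
next
  case empty
  show ?case unfolding lcE_def Gm_empty
  proof (intro allI impI)
    fix x y :: "'a \<Rightarrow> real" and l u v :: real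
    assume l: "0 < l" "l < 1" and uv: "0 \<le> u" "0 \<le> v"
      and u: "ennreal u \<le> ennreal (f (Phi x))" and v: "ennreal v \<le> ennreal (f (Phi y))"
    have fnn: "0 \<le> f z" for z using lc unfolding log_concave_fun_def by blast
    have u': "u \<le> f (Phi x)" using u fnn by (simp add: ennreal_le_iff)
    have v': "v \<le> f (Phi y)" using v fnn by (simp add: ennreal_le_iff)
    have "u powr (1-l) * v powr l \<le> f (Phi x) powr (1-l) * f (Phi y) powr l"
      using u' v' uv l by (intro mult_mono powr_mono2) auto
    also have "\<dots> \<le> f ((1-l) *\<^sub>R Phi x + l *\<^sub>R Phi y)"
      using lc l unfolding log_concave_fun_def by blast
    finally show "ennreal (u powr (1-l) * v powr l) \<le> ennreal (f (Phi (\<lambda>b. (1-l) * x b + l * y b)))"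
      by (simp add: Phi_mix ennreal_leI)
  qed
next
  case (insert j J)
  have IH: "lcE (Gm f J)" using insert by auto
  show ?case unfolding lcE_def
  proof (intro allI impI)
    fix x y :: "'a \<Rightarrow> real" and l u v :: real
    assume l: "0 < l" "l < 1" and uv: "0 \<le> u" "0 \<le> v"
      and u: "ennreal u \<le> Gm f (insert j J) x" and v: "ennreal v \<le> Gm f (insert j J) y"
    define m where "m = (\<lambda>b. (1-l) * x b + l * y b)"
    have "ennreal (u powr (1-l) * v powr l) \<le> (\<integral>\<^sup>+t. Gm f J (m(j := t)) \<partial>lborel)"
    proof (rule PL1[OF l qc_of_lcE[OF IH] qc_of_lcE[OF IH] qc_of_lcE[OF IH] _ uv(1) _ uv(2)])
      fix a b u' v' :: real
      assume "0 \<le> u'" "0 \<le> v'" "ennreal u' \<le> Gm f J (x(j := a))" "ennreal v' \<le> Gm f J (y(j := b))"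
      then have "ennreal (u' powr (1-l) * v' powr l) \<le> Gm f J (\<lambda>c. (1-l) * (x(j := a)) c + l * (y(j := b)) c)"
        using IH l unfolding lcE_def by blast
      moreover have "(\<lambda>c. (1-l) * (x(j := a)) c + l * (y(j := b)) c) = m(j := (1-l)*a + l*b)"
        by (auto simp: fun_eq_iff m_def)
      ultimately show "ennreal (u' powr (1-l) * v' powr l) \<le> Gm f J (m(j := (1-l)*a + l*b))" by simp
    next
      show "ennreal u \<le> (\<integral>\<^sup>+t. Gm f J (x(j := t)) \<partial>lborel)" using u Gm_insert[OF f insert(4) insert(2)] by simp
      show "ennreal v \<le> (\<integral>\<^sup>+t. Gm f J (y(j := t)) \<partial>lborel)" using v Gm_insert[OF f insert(4) insert(2)] by simp
    qed
    then show "ennreal (u powr (1-l) * v powr l) \<le> Gm f (insert j J) (\<lambda>b. (1-l) * x b + l * y b)"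
      using Gm_insert[OF f insert(4) insert(2)] by (simp add: m_def)
  qed
qed

definition lc1 :: "(real \<Rightarrow> ennreal) \<Rightarrow> bool" where
  "lc1 m \<longleftrightarrow> (\<forall>a b l u v. 0 < l \<longrightarrow> l < 1 \<longrightarrow> 0 \<le> u \<longrightarrow> 0 \<le> v \<longrightarrow> ennreal u \<le> m a \<longrightarrow> ennreal v \<le> m b \<longrightarrow>
      ennreal (u powr (1-l) * v powr l) \<le> m ((1-l) * a + l * b))"

lemma lc1_qc:
  assumes "lc1 m" shows "qc m"
  unfolding qc_def
proof
  fix r :: real
  show "convex {t. ennreal r < m t}"
  proof (rule convexI)
    fix a b u v :: real
    assume a: "a \<in> {t. ennreal r < m t}" and b: "b \<in> {t. ennreal r < m t}"
      and uv: "0 \<le> u" "0 \<le> v" "u + v = 1"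
    show "u *\<^sub>R a + v *\<^sub>R b \<in> {t. ennreal r < m t}"
    proof (cases "u = 0 \<or> v = 0")
      case True
      then show ?thesis using a b uv by auto
    next
      case False
      then have v: "0 < v" "v < 1" using uv by auto
      have "ennreal r < min (m a) (m b)" using a b by simp
      then obtain y where y: "ennreal r < y" "y < min (m a) (m b)"
        using dense by blast
      then obtain w where w: "y = ennreal w" "0 \<le> w"
        by (cases y rule: ennreal_cases) auto
      have "ennreal w \<le> m a" "ennreal w \<le> m b" using y w by auto
      then have "ennreal (w powr (1-v) * w powr v) \<le> m ((1-v) * a + v * b)"
        using assms w(2) v unfolding lc1_def by blast
      moreover have "(1-v) * a + v * b = u *\<^sub>R a + v *\<^sub>R b"
      proof -
        have u: "u = 1 - v" using uv by simp
        show ?thesis unfolding u by simp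
      qed
      moreover have "w powr (1-v) * w powr v = w" using w by (simp add: powr_mix_eq)
      ultimately have "ennreal w \<le> m (u *\<^sub>R a + v *\<^sub>R b)" by simp
      then show ?thesis using y w by auto
    qed
  qed
qed

lemma lc1_finite:
  assumes lc: "lc1 m" and int: "(\<integral>\<^sup>+t. m t \<partial>lborel) = 1"
  shows "m t0 < \<top>"
proof (rule ccontr)
  assume "\<not> m t0 < \<top>"
  then have top: "m t0 = \<top>" using top.not_eq_extremum by blast
  have mm[measurable]: "m \<in> borel_measurable borel" using lc1_qc[OF lc] by (rule qc_measurable)
  have "\<exists>s. s \<noteq> t0 \<and> 0 < m s"
  proof (rule ccontr)
    assume "\<not> ?thesis"
    then have "AE t in lborel. m t = 0"
      using AE_lborel_singleton[of t0] by (auto elim!: eventually_mono)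
    from nn_integral_cong_AE[OF this] have "(\<integral>\<^sup>+t. m t \<partial>lborel) = (\<integral>\<^sup>+t. 0 \<partial>lborel)" by simp
    then show False using int by simp
  qed
  then obtain s where s: "s \<noteq> t0" "0 < m s" by blast
  then obtain y where y: "0 < y" "y < m s" using dense by blast
  then obtain v where v: "y = ennreal v" "0 \<le> v" by (cases y rule: ennreal_cases) auto
  have vpos: "0 < v" using y v by simp
  have mv: "ennreal v \<le> m s" using y v by simp
  define lo where "lo = min t0 s"
  define hi where "hi = max t0 s"
  have lohi: "lo < hi" using s by (simp add: lo_def hi_def)
  have seg: "m p = \<top>" if p: "lo < p" "p < hi" for p
  proof -
    define l where "l = (p - t0) / (s - t0)"
    have l: "0 < l" "l < 1" using p s unfolding l_def lo_def hi_def
      by (auto simp: field_simps min_def max_def split: if_splits)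
    have pe: "(1-l) * t0 + l * s = p"
    proof -
      have d: "s - t0 \<noteq> 0" using s by simp
      have "l * (s - t0) = p - t0" unfolding l_def using d by simp
      moreover have "(1-l) * t0 + l * s = t0 + l * (s - t0)" by (simp add: algebra_simps)
      ultimately show ?thesis by simp
    qed
    show ?thesis
    proof (rule ennreal_unbounded_top_real)
      fix N :: real assume N: "0 \<le> N"
      define u where "u = (N / v powr l) powr (1/(1-l))"
      have u0: "0 \<le> u" unfolding u_def by simp
      have "u powr (1-l) = N / v powr l"
        using l N vpos unfolding u_def by (simp add: powr_powr)
      then have "u powr (1-l) * v powr l = N" using vpos by simp
      moreover have "ennreal (u powr (1-l) * v powr l) \<le> m ((1-l) * t0 + l * s)"
        using lc l u0 v(2) mv top unfolding lc1_def by simp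
      ultimately show "ennreal N \<le> m p" using pe by simp
    qed
  qed
  have "(\<integral>\<^sup>+t. \<top> * indicator {lo<..<hi} t \<partial>lborel) \<le> (\<integral>\<^sup>+t. m t \<partial>lborel)"
    by (intro nn_integral_mono) (auto split: split_indicator simp: seg)
  moreover have "(\<integral>\<^sup>+t. \<top> * indicator {lo<..<hi} t \<partial>lborel) = \<top>"
    using lohi by (subst nn_integral_cmult_indicator) (auto simp: ennreal_top_mult)
  ultimately show False using int by (simp add: top_unique)
qed

lemma nn_integral_abs_sym:
  fixes h :: "real \<Rightarrow> ennreal"
  assumes [measurable]: "h \<in> borel_measurable borel"
  shows "(\<integral>\<^sup>+t. h \<bar>t\<bar> \<partial>lborel) = 2 * (\<integral>\<^sup>+t. h t * indicator {0..} t \<partial>lborel)"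
proof -
  have "(\<integral>\<^sup>+t. h \<bar>t\<bar> \<partial>lborel) = (\<integral>\<^sup>+t. h t * indicator {0..} t + h \<bar>t\<bar> * indicator {..<0} t \<partial>lborel)"
    by (intro nn_integral_cong) (auto split: split_indicator)
  also have "\<dots> = (\<integral>\<^sup>+t. h t * indicator {0..} t \<partial>lborel) + (\<integral>\<^sup>+t. h \<bar>t\<bar> * indicator {..<0} t \<partial>lborel)"
    by (rule nn_integral_add) measurable
  also have "(\<integral>\<^sup>+t. h \<bar>t\<bar> * indicator {..<0} t \<partial>lborel) = (\<integral>\<^sup>+t. h t * indicator {0..} t \<partial>lborel)"
  proof -
    have "(\<integral>\<^sup>+t. h \<bar>t\<bar> * indicator {..<0} t \<partial>lborel) = (\<integral>\<^sup>+t. h \<bar>t\<bar> * indicator {..<0} t \<partial>(distr lborel borel uminus))"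
      by (simp add: lborel_distr_uminus)
    also have "\<dots> = (\<integral>\<^sup>+t. h \<bar>- t\<bar> * indicator {..<0} (- t) \<partial>lborel)"
      by (rule nn_integral_distr) measurable
    also have "\<dots> = (\<integral>\<^sup>+t. h t * indicator {0..} t \<partial>lborel)"
    proof (rule nn_integral_cong_AE)
      show "AE t in lborel. h \<bar>- t\<bar> * indicator {..<0} (- t) = h t * indicator {0..} t"
        using AE_lborel_singleton[of 0] by (auto elim!: eventually_mono split: split_indicator)
    qed
    finally show ?thesis .
  qed
  finally show ?thesis by (simp add: mult_2)
qed

lemma exp_moment:
  fixes a :: real assumes a: "0 < a"
  shows "(\<integral>\<^sup>+t. ennreal (t ^ i * exp (- a * t)) * indicator {0..} t \<partial>lborel) = ennreal (fact i / a ^ (i+1))"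
proof -
  have "ennreal a * (\<integral>\<^sup>+t. ennreal (t ^ i * exp (- a * t)) * indicator {0..} t \<partial>lborel)
     = (\<integral>\<^sup>+t. ennreal a * (ennreal (t ^ i * exp (- a * t)) * indicator {0..} t) \<partial>lborel)"
    by (rule nn_integral_cmult[symmetric]) measurable
  also have "\<dots> = (\<integral>\<^sup>+ x. ennreal (erlang_density 0 a x * x ^ i) \<partial>lborel)"
    using a by (intro nn_integral_cong) (auto simp: erlang_density_def ennreal_mult'[symmetric] split: split_indicator)
  also have "\<dots> = fact i / (fact 0 * a ^ i)"
    using nn_integral_erlang_ith_moment[OF a, of 0 i] by simp
  finally have eq: "ennreal a * (\<integral>\<^sup>+t. ennreal (t ^ i * exp (- a * t)) * indicator {0..} t \<partial>lborel) = ennreal (fact i / a ^ i)"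
    by simp
  have "fact i / a ^ i = a * (fact i / a ^ (i+1))" using a by simp
  then have "ennreal (fact i / a ^ i) = ennreal a * ennreal (fact i / a ^ (i+1))"
    using a by (simp add: ennreal_mult[symmetric] del: ennreal_mult)
  with eq have "(\<integral>\<^sup>+t. ennreal (t ^ i * exp (- a * t)) * indicator {0..} t \<partial>lborel) * ennreal a = ennreal (fact i / a ^ (i+1)) * ennreal a"
    by (simp add: mult.commute)
  then show ?thesis using a by (simp add: mult_right_ennreal_cancel)
qed

lemma ennreal_2_mult: "0 \<le> y \<Longrightarrow> 2 * ennreal y = ennreal (2 * y)"
  by (simp add: ennreal_mult)

lemma ennreal_2_mult2: "0 \<le> x \<Longrightarrow> 0 \<le> y \<Longrightarrow> 2 * (ennreal x * ennreal y) = ennreal (2 * (x * y))"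
  by (simp add: ennreal_2_mult ennreal_mult[symmetric])

lemma marg_bound:
  fixes m :: "real \<Rightarrow> ennreal"
  assumes lc: "lc1 m" and sym: "\<And>t. m (- t) = m t"
    and int1: "(\<integral>\<^sup>+t. m t \<partial>lborel) = 1"
    and int2: "(\<integral>\<^sup>+t. ennreal (t\<^sup>2) * m t \<partial>lborel) = 1"
  shows "m 0 \<le> ennreal (1 / sqrt 2)"
proof -
  have mm[measurable]: "m \<in> borel_measurable borel" using lc1_qc[OF lc] by (rule qc_measurable)
  have fin: "m t < \<top>" for t by (rule lc1_finite[OF lc int1])
  define g where "g t = enn2real (m t)" for t
  have mg: "m t = ennreal (g t)" for t unfolding g_def using fin[of t] by (simp add: ennreal_enn2real_if less_top)
  have g0le: "0 \<le> g t" for t unfolding g_def by simp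
  have gm[measurable]: "g \<in> borel_measurable borel" unfolding g_def by measurable
  have glc: "g a powr (1-l) * g b powr l \<le> g ((1-l) * a + l * b)" if l: "0 < l" "l < 1" for a b l
  proof -
    have "ennreal (g a powr (1-l) * g b powr l) \<le> m ((1-l) * a + l * b)"
      using lc l g0le[of a] g0le[of b] mg[of a] mg[of b] unfolding lc1_def by simp
    then show ?thesis using g0le by (simp add: mg ennreal_le_iff)
  qed
  have gsym: "g (- t) = g t" for t unfolding g_def using sym by simp
  have gmax: "g t \<le> g 0" for t
  proof -
    have "g t powr (1 - 1/2) * g (- t) powr (1/2) \<le> g ((1 - 1/2) * t + 1/2 * (- t))"
      by (rule glc) auto
    moreover have "g t powr (1 - 1/2) * g t powr (1/2) = g t" by (rule powr_mix_eq[OF g0le])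
    ultimately show ?thesis using gsym by simp
  qed
  define g0 where "g0 = g 0"
  have g0pos: "0 < g0"
  proof (rule ccontr)
    assume "\<not> 0 < g0"
    then have "g t = 0" for t using gmax[of t] g0le[of t] unfolding g0_def by simp
    then have "m t = 0" for t by (simp add: mg)
    then show False using int1 by simp
  qed
  have int1': "(\<integral>\<^sup>+t. ennreal (g t) \<partial>lborel) = 1" using int1 by (simp add: mg)
  have int2': "(\<integral>\<^sup>+t. ennreal (t\<^sup>2 * g t) \<partial>lborel) = 1"
    using int2 g0le by (simp add: mg ennreal_mult)
  define a where "a = 2 * g0"
  have apos: "0 < a" using g0pos by (simp add: a_def)
  define phi where "phi t = g0 * exp (- a * \<bar>t\<bar>)" for t
  have phi0: "0 \<le> phi t" for t using g0pos by (simp add: phi_def)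
  have phim[measurable]: "phi \<in> borel_measurable borel" unfolding phi_def by measurable
  have Iphi: "(\<integral>\<^sup>+t. ennreal (phi t) \<partial>lborel) = 1"
  proof -
    have "(\<integral>\<^sup>+t. ennreal (phi t) \<partial>lborel) = (\<integral>\<^sup>+t. (\<lambda>s. ennreal (g0 * exp (- a * s))) \<bar>t\<bar> \<partial>lborel)"
      by (simp add: phi_def)
    also have "\<dots> = 2 * (\<integral>\<^sup>+t. ennreal (g0 * exp (- a * t)) * indicator {0..} t \<partial>lborel)"
      by (rule nn_integral_abs_sym) measurable
    also have "(\<integral>\<^sup>+t. ennreal (g0 * exp (- a * t)) * indicator {0..} t \<partial>lborel)
        = (\<integral>\<^sup>+t. ennreal g0 * (ennreal (t ^ 0 * exp (- a * t)) * indicator {0..} t) \<partial>lborel)"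
      using g0pos by (intro nn_integral_cong) (simp add: ennreal_mult mult.assoc)
    also have "\<dots> = ennreal g0 * (\<integral>\<^sup>+t. ennreal (t ^ 0 * exp (- a * t)) * indicator {0..} t \<partial>lborel)"
      by (rule nn_integral_cmult) measurable
    also have "\<dots> = ennreal g0 * ennreal (fact 0 / a ^ (0+1))" by (simp only: exp_moment[OF apos])
    also have "2 * (ennreal g0 * ennreal (fact 0 / a ^ (0+1))) = ennreal (2 * (g0 * (fact 0 / a ^ (0+1))))"
      using g0pos apos by (intro ennreal_2_mult2) auto
    also have "2 * (g0 * (fact 0 / a ^ (0+1))) = 1" using g0pos by (simp add: a_def)
    finally show ?thesis by simp
  qed
  have I2phi: "(\<integral>\<^sup>+t. ennreal (t\<^sup>2 * phi t) \<partial>lborel) = ennreal (1 / (2 * g0\<^sup>2))"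
  proof -
    have "(\<integral>\<^sup>+t. ennreal (t\<^sup>2 * phi t) \<partial>lborel) = (\<integral>\<^sup>+t. (\<lambda>s. ennreal (s ^ 2 * (g0 * exp (- a * s)))) \<bar>t\<bar> \<partial>lborel)"
      by (simp add: phi_def)
    also have "\<dots> = 2 * (\<integral>\<^sup>+t. ennreal (t ^ 2 * (g0 * exp (- a * t))) * indicator {0..} t \<partial>lborel)"
      by (rule nn_integral_abs_sym) measurable
    also have "(\<integral>\<^sup>+t. ennreal (t ^ 2 * (g0 * exp (- a * t))) * indicator {0..} t \<partial>lborel)
        = (\<integral>\<^sup>+t. ennreal g0 * (ennreal (t ^ 2 * exp (- a * t)) * indicator {0..} t) \<partial>lborel)"
      using g0pos by (intro nn_integral_cong) (simp add: ennreal_mult mult_ac)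
    also have "\<dots> = ennreal g0 * (\<integral>\<^sup>+t. ennreal (t ^ 2 * exp (- a * t)) * indicator {0..} t \<partial>lborel)"
      by (rule nn_integral_cmult) measurable
    also have "\<dots> = ennreal g0 * ennreal (fact 2 / a ^ (2+1))" by (simp only: exp_moment[OF apos])
    also have "2 * (ennreal g0 * ennreal (fact 2 / a ^ (2+1))) = ennreal (2 * (g0 * (fact 2 / a ^ (2+1))))"
      using g0pos apos by (intro ennreal_2_mult2) auto
    also have "2 * (g0 * (fact 2 / a ^ (2+1))) = 1 / (2 * g0\<^sup>2)" using g0pos
      by (simp add: a_def field_simps power3_eq_cube power2_eq_square)
    finally show ?thesis by simp
  qed
  have phi_at0: "phi 0 = g0" by (simp add: phi_def)
  have phisym: "phi (- t) = phi t" for t by (simp add: phi_def)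
  define P where "P = {t. 0 \<le> t \<and> g t < phi t}"
  have cross: "g s \<le> phi s" if t1: "t1 \<in> P" and ts: "t1 < s" for t1 s
  proof (rule ccontr)
    assume "\<not> g s \<le> phi s"
    then have gs: "phi s < g s" by simp
    have t1pos: "0 < t1"
    proof -
      have "t1 \<noteq> 0" using t1 phi_at0 unfolding P_def g0_def by auto
      then show ?thesis using t1 unfolding P_def by auto
    qed
    have spos: "0 < s" using t1pos ts by simp
    define l where "l = t1 / s"
    have l: "0 < l" "l < 1" using t1pos ts spos by (auto simp: l_def)
    have t1e: "(1-l) * 0 + l * s = t1" using spos by (simp add: l_def)
    have "g 0 powr (1-l) * g s powr l \<le> g t1" using glc[OF l, of 0 s] t1e by simp
    moreover have "g0 powr (1-l) * phi s powr l < g0 powr (1-l) * g s powr l"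
    proof -
      have "phi s powr l < g s powr l" using gs phi0 l by (intro powr_less_mono2) auto
      moreover have "0 < g0 powr (1-l)" using g0pos by simp
      ultimately show ?thesis by simp
    qed
    moreover have "g0 powr (1-l) * phi s powr l = phi t1"
    proof -
      have "phi s powr l = g0 powr l * exp (- a * s) powr l"
        unfolding phi_def using spos g0pos by (simp add: powr_mult)
      also have "exp (- a * s) powr l = exp (- a * t1)"
        using spos by (simp add: powr_def l_def)
      finally have "g0 powr (1-l) * phi s powr l = (g0 powr (1-l) * g0 powr l) * exp (- a * t1)"
        by simp
      also have "g0 powr (1-l) * g0 powr l = g0" using g0pos by (simp add: powr_mix_eq)
      finally show ?thesis using t1pos by (simp add: phi_def)
    qed
    ultimately have "phi t1 < g t1" by (simp add: g0_def)
    then show False using t1 unfolding P_def by simp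
  qed
  have key: "1 \<le> ennreal (1 / (2 * g0\<^sup>2))"
  proof (cases "P = {}")
    case True
    have ge: "phi t \<le> g t" for t
    proof -
      have "\<bar>t\<bar> \<notin> P" using True by simp
      then have "phi \<bar>t\<bar> \<le> g \<bar>t\<bar>" unfolding P_def by auto
      then show ?thesis by (cases "0 \<le> t") (auto simp: gsym phisym)
    qed
    have "(\<integral>\<^sup>+t. ennreal (g t) \<partial>lborel) = (\<integral>\<^sup>+t. ennreal (phi t) + ennreal (g t - phi t) \<partial>lborel)"
      using ge phi0 by (intro nn_integral_cong) (simp add: ennreal_plus[symmetric] del: ennreal_plus)
    also have "\<dots> = (\<integral>\<^sup>+t. ennreal (phi t) \<partial>lborel) + (\<integral>\<^sup>+t. ennreal (g t - phi t) \<partial>lborel)"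
      by (rule nn_integral_add) measurable
    finally have "(\<integral>\<^sup>+t. ennreal (g t - phi t) \<partial>lborel) = 0" using int1' Iphi by simp
    then have "AE t in lborel. ennreal (g t - phi t) = 0" by (subst (asm) nn_integral_0_iff_AE) measurable
    then have "AE t in lborel. ennreal (t\<^sup>2 * g t) = ennreal (t\<^sup>2 * phi t)"
    proof (rule eventually_mono)
      fix t assume "ennreal (g t - phi t) = 0"
      then have "g t = phi t" using ge[of t] by (simp add: ennreal_eq_0_iff)
      then show "ennreal (t\<^sup>2 * g t) = ennreal (t\<^sup>2 * phi t)" by simp
    qed
    then have "(\<integral>\<^sup>+t. ennreal (t\<^sup>2 * g t) \<partial>lborel) = (\<integral>\<^sup>+t. ennreal (t\<^sup>2 * phi t) \<partial>lborel)"
      by (rule nn_integral_cong_AE)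
    then show ?thesis using int2' I2phi by simp
  next
    case False
    define c where "c = Inf P"
    have bdd: "bdd_below P" unfolding P_def by (auto intro: bdd_belowI[of _ 0])
    have c0: "0 \<le> c" unfolding c_def using False by (intro cInf_greatest) (auto simp: P_def)
    have pt: "t\<^sup>2 * g t + c\<^sup>2 * phi t \<le> t\<^sup>2 * phi t + c\<^sup>2 * g t" for t
    proof -
      define s where "s = \<bar>t\<bar>"
      have s0: "0 \<le> s" by (simp add: s_def)
      have gs: "g t = g s" "phi t = phi s" unfolding s_def by (cases "0 \<le> t"; simp add: gsym phisym)+
      have ts: "t\<^sup>2 = s\<^sup>2" unfolding s_def by simp
      have "(s\<^sup>2 - c\<^sup>2) * (g s - phi s) \<le> 0"
      proof (cases s c rule: linorder_cases)
        case less
        then have "s \<notin> P" using cInf_lower[OF _ bdd, of s] unfolding c_def by auto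
        then have "phi s \<le> g s" using s0 unfolding P_def by auto
        moreover have "s\<^sup>2 \<le> c\<^sup>2" using less s0 by (intro power_mono) auto
        ultimately show ?thesis by (intro mult_nonpos_nonneg) auto
      next
        case equal then show ?thesis by simp
      next
        case greater
        then obtain t1 where "t1 \<in> P" "t1 < s" using cInf_less_iff[OF False bdd] unfolding c_def by auto
        then have "g s \<le> phi s" by (rule cross)
        moreover have "c\<^sup>2 \<le> s\<^sup>2" using greater c0 by (intro power_mono) auto
        ultimately show ?thesis by (intro mult_nonneg_nonpos) auto
      qed
      moreover have "(s\<^sup>2 - c\<^sup>2) * (g s - phi s) = (s\<^sup>2 * g s + c\<^sup>2 * phi s) - (s\<^sup>2 * phi s + c\<^sup>2 * g s)"
        by (simp add: algebra_simps)
      ultimately show ?thesis unfolding gs ts by simp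
    qed
    have "(\<integral>\<^sup>+t. ennreal (t\<^sup>2 * g t) + ennreal (c\<^sup>2 * phi t) \<partial>lborel)
        \<le> (\<integral>\<^sup>+t. ennreal (t\<^sup>2 * phi t) + ennreal (c\<^sup>2 * g t) \<partial>lborel)"
    proof (intro nn_integral_mono)
      fix t
      have "ennreal (t\<^sup>2 * g t) + ennreal (c\<^sup>2 * phi t) = ennreal (t\<^sup>2 * g t + c\<^sup>2 * phi t)"
        using g0le phi0 by (intro ennreal_plus[symmetric]) auto
      also have "\<dots> \<le> ennreal (t\<^sup>2 * phi t + c\<^sup>2 * g t)" using pt by (rule ennreal_leI)
      also have "\<dots> = ennreal (t\<^sup>2 * phi t) + ennreal (c\<^sup>2 * g t)"
        using g0le phi0 by (intro ennreal_plus) auto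
      finally show "ennreal (t\<^sup>2 * g t) + ennreal (c\<^sup>2 * phi t) \<le> ennreal (t\<^sup>2 * phi t) + ennreal (c\<^sup>2 * g t)" .
    qed
    moreover have "(\<integral>\<^sup>+t. ennreal (t\<^sup>2 * g t) + ennreal (c\<^sup>2 * phi t) \<partial>lborel) = 1 + ennreal (c\<^sup>2)"
    proof -
      have "(\<integral>\<^sup>+t. ennreal (t\<^sup>2 * g t) + ennreal (c\<^sup>2 * phi t) \<partial>lborel)
        = (\<integral>\<^sup>+t. ennreal (t\<^sup>2 * g t) \<partial>lborel) + (\<integral>\<^sup>+t. ennreal (c\<^sup>2) * ennreal (phi t) \<partial>lborel)"
        using phi0 by (subst nn_integral_add[symmetric]) (auto intro!: nn_integral_cong simp: ennreal_mult)
      also have "(\<integral>\<^sup>+t. ennreal (c\<^sup>2) * ennreal (phi t) \<partial>lborel) = ennreal (c\<^sup>2) * 1"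
        by (subst nn_integral_cmult) (auto simp: Iphi)
      finally show ?thesis using int2' by simp
    qed
    moreover have "(\<integral>\<^sup>+t. ennreal (t\<^sup>2 * phi t) + ennreal (c\<^sup>2 * g t) \<partial>lborel) = ennreal (1 / (2 * g0\<^sup>2)) + ennreal (c\<^sup>2)"
    proof -
      have "(\<integral>\<^sup>+t. ennreal (t\<^sup>2 * phi t) + ennreal (c\<^sup>2 * g t) \<partial>lborel)
        = (\<integral>\<^sup>+t. ennreal (t\<^sup>2 * phi t) \<partial>lborel) + (\<integral>\<^sup>+t. ennreal (c\<^sup>2) * ennreal (g t) \<partial>lborel)"
        using g0le by (subst nn_integral_add[symmetric]) (auto intro!: nn_integral_cong simp: ennreal_mult)
      also have "(\<integral>\<^sup>+t. ennreal (c\<^sup>2) * ennreal (g t) \<partial>lborel) = ennreal (c\<^sup>2) * 1"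
        by (subst nn_integral_cmult) (auto simp: int1')
      finally show ?thesis using I2phi by simp
    qed
    ultimately have "1 + ennreal (c\<^sup>2) \<le> ennreal (1 / (2 * g0\<^sup>2)) + ennreal (c\<^sup>2)" by simp
    then show ?thesis by (simp add: add.commute[of _ "ennreal (c\<^sup>2)"] ennreal_add_left_cancel_le)
  qed
  have "1 \<le> 1 / (2 * g0\<^sup>2)" using key g0pos by (simp add: ennreal_le_iff2 ennreal_1[symmetric] del: ennreal_1)
  then have "g0\<^sup>2 \<le> 1/2" using g0pos by (simp add: field_simps)
  then have "g0 \<le> sqrt (1/2)" by (rule real_le_rsqrt)
  then have "g0 \<le> 1 / sqrt 2" by (simp add: real_sqrt_divide)
  then show ?thesis using mg[of 0] unfolding g0_def by (simp add: ennreal_leI)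
qed

lemma Phi_cong: "(\<And>b. b \<in> Basis \<Longrightarrow> w b = w' b) \<Longrightarrow> Phi w = Phi w'"
  unfolding Phi_def by (intro sum.cong) auto

lemma Phi_inner:
  assumes "b0 \<in> (Basis :: 'a::euclidean_space set)" shows "Phi w \<bullet> b0 = w b0"
proof -
  have "Phi w \<bullet> b0 = (\<Sum>b\<in>Basis. w b * (b \<bullet> b0))" unfolding Phi_def by (simp add: inner_sum_left)
  also have "\<dots> = (\<Sum>b\<in>Basis. if b = b0 then w b0 else 0)"
    using assms by (intro sum.cong) (auto simp: inner_Basis)
  also have "\<dots> = w b0" using assms by simp
  finally show ?thesis .
qed

lemma Phi_line:
  fixes b0 :: "'a::euclidean_space"
  assumes b0: "b0 \<in> Basis"
  shows "Phi (\<lambda>b. if b \<in> Basis - {b0} then z b else t) = Phi (\<lambda>b. if b \<in> Basis - {b0} then z b else 0) + t *\<^sub>R b0"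
proof -
  have "Phi (\<lambda>b. if b \<in> Basis - {b0} then z b else t) =
     (\<Sum>b\<in>Basis. (if b \<in> Basis - {b0} then z b else 0) *\<^sub>R b + (if b = b0 then t *\<^sub>R b else 0))"
    unfolding Phi_def by (intro sum.cong) auto
  also have "\<dots> = Phi (\<lambda>b. if b \<in> Basis - {b0} then z b else 0) + (\<Sum>b\<in>Basis. (if b = b0 then t *\<^sub>R b else 0))"
    unfolding Phi_def by (rule sum.distrib)
  also have "(\<Sum>b\<in>Basis. (if b = b0 then t *\<^sub>R b else 0)) = t *\<^sub>R b0"
    using b0 by (simp add: sum.delta')
  finally show ?thesis .
qed

lemma Phi_measurable: "Phi \<in> borel_measurable (PiM (Basis :: 'a::euclidean_space set) (\<lambda>_. lborel))"
  unfolding Phi_def by measurable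

lemma fubini_line:
  fixes h :: "'a::euclidean_space \<Rightarrow> ennreal"
  assumes h[measurable]: "h \<in> borel_measurable borel" and b0: "b0 \<in> Basis"
  shows "(\<integral>\<^sup>+x. h x \<partial>lborel) =
    (\<integral>\<^sup>+z. (\<integral>\<^sup>+t. h (Phi (\<lambda>b. if b \<in> Basis - {b0} then z b else t)) \<partial>lborel) \<partial>PiM (Basis - {b0}) (\<lambda>_. lborel))"
    and "(\<integral>\<^sup>+x. h x \<partial>lborel) =
    (\<integral>\<^sup>+t. (\<integral>\<^sup>+z. h (Phi (\<lambda>b. if b \<in> Basis - {b0} then z b else t)) \<partial>PiM (Basis - {b0}) (\<lambda>_. lborel)) \<partial>lborel)"
proof -
  interpret product_sigma_finite "\<lambda>_. lborel" by standard
  define J where "J = Basis - {b0}"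
  have BJ: "Basis = insert b0 J" "b0 \<notin> J" "finite J" using b0 by (auto simp: J_def)
  have Pm: "Phi \<in> borel_measurable (PiM (insert b0 J) (\<lambda>_. lborel))"
    using Phi_measurable BJ(1) by metis
  have hm: "(\<lambda>g. h (Phi g)) \<in> borel_measurable (PiM (insert b0 J) (\<lambda>_. lborel))"
    using measurable_compose[OF Pm h] by (simp add: comp_def)
  have eq: "Phi (z(b0 := t)) = Phi (\<lambda>b. if b \<in> J then z b else t)" for z t
    by (rule Phi_cong) (auto simp: J_def)
  have LB: "lborel = distr (PiM Basis (\<lambda>_. lborel)) borel (Phi :: ('a \<Rightarrow> real) \<Rightarrow> 'a)"
    using lborel_eq unfolding Phi_def[abs_def] by simp
  have "(\<integral>\<^sup>+x. h x \<partial>lborel) = (\<integral>\<^sup>+x. h x \<partial>distr (PiM Basis (\<lambda>_. lborel)) borel Phi)"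
    using arg_cong[OF LB, of "\<lambda>M. integral\<^sup>N M h"] .
  also have "\<dots> = (\<integral>\<^sup>+g. h (Phi g) \<partial>PiM Basis (\<lambda>_. lborel))"
    by (rule nn_integral_distr[OF Phi_measurable]) measurable
  finally have L: "(\<integral>\<^sup>+x. h x \<partial>lborel) = (\<integral>\<^sup>+g. h (Phi g) \<partial>PiM (insert b0 J) (\<lambda>_. lborel))"
    using BJ(1) by simp
  show "(\<integral>\<^sup>+x. h x \<partial>lborel) =
    (\<integral>\<^sup>+z. (\<integral>\<^sup>+t. h (Phi (\<lambda>b. if b \<in> Basis - {b0} then z b else t)) \<partial>lborel) \<partial>PiM (Basis - {b0}) (\<lambda>_. lborel))"
  proof -
    have "(\<integral>\<^sup>+g. h (Phi g) \<partial>PiM (insert b0 J) (\<lambda>_. lborel)) = (\<integral>\<^sup>+z. (\<integral>\<^sup>+t. h (Phi (z(b0 := t))) \<partial>lborel) \<partial>PiM J (\<lambda>_. lborel))"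
      by (rule product_nn_integral_insert[OF BJ(3) BJ(2) hm])
    then show ?thesis unfolding L eq J_def by simp
  qed
  show "(\<integral>\<^sup>+x. h x \<partial>lborel) =
    (\<integral>\<^sup>+t. (\<integral>\<^sup>+z. h (Phi (\<lambda>b. if b \<in> Basis - {b0} then z b else t)) \<partial>PiM (Basis - {b0}) (\<lambda>_. lborel)) \<partial>lborel)"
  proof -
    have "(\<integral>\<^sup>+g. h (Phi g) \<partial>PiM (insert b0 J) (\<lambda>_. lborel)) = (\<integral>\<^sup>+t. (\<integral>\<^sup>+z. h (Phi (z(b0 := t))) \<partial>PiM J (\<lambda>_. lborel)) \<partial>lborel)"
      by (rule product_nn_integral_insert_rev[OF BJ(3) BJ(2) hm])
    then show ?thesis unfolding L eq J_def by simp
  qed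
qed

lemma slab_1d_sub:
  fixes Jc :: "real set"
  assumes "convex Jc"
  shows "{t. t \<notin> Jc \<and> (\<exists>j\<in>Jc. \<bar>t - j\<bar> \<le> d)} \<subseteq> {Sup Jc .. Sup Jc + d} \<union> {Inf Jc - d .. Inf Jc}"
proof -
  have sub: "{t. t \<notin> Jc \<and> (\<exists>j\<in>Jc. \<bar>t - j\<bar> \<le> d)} \<subseteq> {Sup Jc .. Sup Jc + d} \<union> {Inf Jc - d .. Inf Jc}"
  proof
    fix t assume "t \<in> {t. t \<notin> Jc \<and> (\<exists>j\<in>Jc. \<bar>t - j\<bar> \<le> d)}"
    then obtain j where t: "t \<notin> Jc" "j \<in> Jc" "\<bar>t - j\<bar> \<le> d" by auto
    show "t \<in> {Sup Jc .. Sup Jc + d} \<union> {Inf Jc - d .. Inf Jc}"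
    proof (cases "j < t")
      case True
      have up: "x \<le> t" if "x \<in> Jc" for x
      proof (rule ccontr)
        assume "\<not> x \<le> t"
        then have "t \<in> Jc" using convex_real_between[OF assms(1) t(2) that, of t] True by simp
        then show False using t by simp
      qed
      then have "bdd_above Jc" by (auto simp: bdd_above_def)
      then have "j \<le> Sup Jc" "Sup Jc \<le> t" using t(2) up by (auto intro: cSup_upper cSup_least)
      then show ?thesis using t by auto
    next
      case False
      then have jt: "t < j" using t by (cases "t = j") auto
      have lo: "t \<le> x" if "x \<in> Jc" for x
      proof (rule ccontr)
        assume "\<not> t \<le> x"
        then have "t \<in> Jc" using convex_real_between[OF assms(1) that t(2), of t] jt by simp
        then show False using t by simp
      qed
      then have "bdd_below Jc" by (auto simp: bdd_below_def)
      then have "Inf Jc \<le> j" "t \<le> Inf Jc" using t(2) lo by (auto intro: cInf_lower cInf_greatest)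
      then show ?thesis using t by auto
    qed
  qed
  show ?thesis by (rule sub)
qed

lemma slab_1d:
  fixes Jc :: "real set"
  assumes "0 \<le> d"
  shows "emeasure lborel ({Sup Jc .. Sup Jc + d} \<union> {Inf Jc - d .. Inf Jc}) \<le> ennreal (2 * d)"
proof -
  have "emeasure lborel ({Sup Jc .. Sup Jc + d} \<union> {Inf Jc - d .. Inf Jc}) \<le> emeasure lborel {Sup Jc .. Sup Jc + d} + emeasure lborel {Inf Jc - d .. Inf Jc}"
    by (rule emeasure_subadditive) auto
  also have "\<dots> = ennreal d + ennreal d" using assms by simp
  also have "\<dots> = ennreal (2 * d)" using assms by (simp add: ennreal_plus[symmetric] del: ennreal_plus)
  finally show ?thesis .
qed

definition slab :: "'a::euclidean_space set \<Rightarrow> 'a \<Rightarrow> real \<Rightarrow> 'a set" where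
  "slab C b0 d = {c + s *\<^sub>R b0 | c s. c \<in> C \<and> \<bar>s\<bar> \<le> d}"

lemma slab_eq: "slab C b0 d = (\<Union>x\<in>C. \<Union>y\<in>(\<lambda>s. s *\<^sub>R b0) ` {-d..d}. {x + y})"
proof (intro set_eqI iffI)
  fix x assume "x \<in> slab C b0 d"
  then obtain c s where cs: "x = c + s *\<^sub>R b0" "c \<in> C" "\<bar>s\<bar> \<le> d" unfolding slab_def by auto
  then have "s *\<^sub>R b0 \<in> (\<lambda>s. s *\<^sub>R b0) ` {-d..d}" by (auto simp: abs_le_iff)
  then show "x \<in> (\<Union>x\<in>C. \<Union>y\<in>(\<lambda>s. s *\<^sub>R b0) ` {-d..d}. {x + y})" using cs by blast
next
  fix x assume "x \<in> (\<Union>x\<in>C. \<Union>y\<in>(\<lambda>s. s *\<^sub>R b0) ` {-d..d}. {x + y})"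
  then obtain c s where cs: "x = c + s *\<^sub>R b0" "c \<in> C" "s \<in> {-d..d}" by blast
  then have "\<bar>s\<bar> \<le> d" by auto
  then show "x \<in> slab C b0 d" unfolding slab_def using cs by blast
qed

lemma closed_slab: "closed C \<Longrightarrow> closed (slab C b0 d)"
  unfolding slab_eq
  by (intro closed_compact_sums compact_continuous_image continuous_intros) auto

lemma convex_slab: "convex C \<Longrightarrow> convex (slab C b0 d)"
  unfolding slab_eq
  by (intro convex_sums convex_linear_image) (auto intro: linear_scaleR_left)

lemma slab_bound:
  fixes f :: "'a::euclidean_space \<Rightarrow> real" and C :: "'a set"
  assumes fc: "continuous_on UNIV f" and f0: "\<And>x. 0 \<le> f x" and b0: "b0 \<in> Basis"
    and C: "closed C" "convex C" and d: "0 \<le> d"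
    and mono: "\<And>q t. q \<bullet> b0 = 0 \<Longrightarrow> f (q + t *\<^sub>R b0) \<le> f q"
  shows "(\<integral>\<^sup>+x. indicator (slab C b0 d - C) x * ennreal (f x) \<partial>lborel) \<le> ennreal (2 * d) * Gm f (Basis - {b0}) (\<lambda>_. 0)"
proof -
  define J where "J = Basis - {b0}"
  have fm[measurable]: "f \<in> borel_measurable borel" by (rule borel_measurable_continuous_onI[OF fc])
  have Sm[measurable]: "slab C b0 d - C \<in> sets borel"
    using closed_slab[OF C(1)] C(1) by (intro sets.Diff borel_closed) auto
  define q where "q z = Phi (\<lambda>b. if b \<in> J then z b else 0)" for z
  have qb: "q z \<bullet> b0 = 0" for z unfolding q_def using b0 by (simp add: Phi_inner J_def)
  have pq: "Phi (\<lambda>b. if b \<in> J then z b else t) = q z + t *\<^sub>R b0" for z t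
    unfolding q_def J_def by (rule Phi_line[OF b0])
  have "(\<integral>\<^sup>+x. indicator (slab C b0 d - C) x * ennreal (f x) \<partial>lborel) =
    (\<integral>\<^sup>+z. (\<integral>\<^sup>+t. indicator (slab C b0 d - C) (q z + t *\<^sub>R b0) * ennreal (f (q z + t *\<^sub>R b0)) \<partial>lborel) \<partial>PiM J (\<lambda>_. lborel))"
    unfolding J_def pq[unfolded J_def, symmetric] by (rule fubini_line(1)[OF _ b0]) measurable
  also have "\<dots> \<le> (\<integral>\<^sup>+z. ennreal (2 * d) * ennreal (f (q z)) \<partial>PiM J (\<lambda>_. lborel))"
  proof (rule nn_integral_mono)
    fix z
    define Jc where "Jc = {t. q z + t *\<^sub>R b0 \<in> C}"
    have Jcc: "convex Jc" unfolding Jc_def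
    proof (rule convexI)
      fix a b u v :: real assume "a \<in> {t. q z + t *\<^sub>R b0 \<in> C}" "b \<in> {t. q z + t *\<^sub>R b0 \<in> C}" "0 \<le> u" "0 \<le> v" "u + v = 1"
      then have "u *\<^sub>R (q z + a *\<^sub>R b0) + v *\<^sub>R (q z + b *\<^sub>R b0) \<in> C" using C(2) by (simp add: convex_def)
      moreover have "u *\<^sub>R (q z + a *\<^sub>R b0) + v *\<^sub>R (q z + b *\<^sub>R b0) = q z + (u *\<^sub>R a + v *\<^sub>R b) *\<^sub>R b0"
        using \<open>u + v = 1\<close> by (simp add: algebra_simps flip: scaleR_add_left)
      ultimately show "u *\<^sub>R a + v *\<^sub>R b \<in> {t. q z + t *\<^sub>R b0 \<in> C}" by simp
    qed
    define U where "U = {Sup Jc .. Sup Jc + d} \<union> {Inf Jc - d .. Inf Jc}"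
    have sub: "{t. q z + t *\<^sub>R b0 \<in> slab C b0 d - C} \<subseteq> {t. t \<notin> Jc \<and> (\<exists>j\<in>Jc. \<bar>t - j\<bar> \<le> d)}"
    proof
      fix t assume "t \<in> {t. q z + t *\<^sub>R b0 \<in> slab C b0 d - C}"
      then obtain c s where cs: "q z + t *\<^sub>R b0 = c + s *\<^sub>R b0" "c \<in> C" "\<bar>s\<bar> \<le> d" "q z + t *\<^sub>R b0 \<notin> C"
        unfolding slab_def by auto
      have "c = q z + (t - s) *\<^sub>R b0" using cs(1) by (simp add: algebra_simps)
      then have "t - s \<in> Jc" using cs(2) by (simp add: Jc_def)
      moreover have "t \<notin> Jc" using cs(4) by (simp add: Jc_def)
      ultimately show "t \<in> {t. t \<notin> Jc \<and> (\<exists>j\<in>Jc. \<bar>t - j\<bar> \<le> d)}" using cs(3) by force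
    qed
    have measS: "emeasure lborel {t. q z + t *\<^sub>R b0 \<in> slab C b0 d - C} \<le> ennreal (2 * d)"
    proof -
      have "{t. q z + t *\<^sub>R b0 \<in> slab C b0 d - C} \<in> sets lborel" by measurable
      have "emeasure lborel {t. q z + t *\<^sub>R b0 \<in> slab C b0 d - C} \<le> emeasure lborel ({Sup Jc .. Sup Jc + d} \<union> {Inf Jc - d .. Inf Jc})"
        by (intro emeasure_mono) (use sub slab_1d_sub[OF Jcc, of d] in auto)
      also have "\<dots> \<le> ennreal (2 * d)" by (rule slab_1d[OF d])
      finally show ?thesis .
    qed
    have "(\<integral>\<^sup>+t. indicator (slab C b0 d - C) (q z + t *\<^sub>R b0) * ennreal (f (q z + t *\<^sub>R b0)) \<partial>lborel)
        \<le> (\<integral>\<^sup>+t. ennreal (f (q z)) * indicator {t. q z + t *\<^sub>R b0 \<in> slab C b0 d - C} t \<partial>lborel)"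
      using mono[OF qb] by (intro nn_integral_mono) (auto split: split_indicator intro: ennreal_leI)
    also have "\<dots> = ennreal (f (q z)) * emeasure lborel {t. q z + t *\<^sub>R b0 \<in> slab C b0 d - C}"
      by (rule nn_integral_cmult_indicator) measurable
    also have "\<dots> \<le> ennreal (f (q z)) * ennreal (2 * d)" by (intro mult_left_mono measS) auto
    finally show "(\<integral>\<^sup>+t. indicator (slab C b0 d - C) (q z + t *\<^sub>R b0) * ennreal (f (q z + t *\<^sub>R b0)) \<partial>lborel)
        \<le> ennreal (2 * d) * ennreal (f (q z))" by (simp add: mult.commute)
  qed
  also have "\<dots> = ennreal (2 * d) * Gm f (Basis - {b0}) (\<lambda>_. 0)"
  proof -
    have "J \<subseteq> Basis" by (auto simp: J_def)
    then have "(\<lambda>z. ennreal (f (q z))) \<in> borel_measurable (PiM J (\<lambda>_. lborel))"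
      unfolding q_def using meas_Gm_integrand[OF fc, of J "\<lambda>_. 0"] by simp
    then show ?thesis unfolding Gm_def q_def J_def by (simp add: nn_integral_cmult)
  qed
  finally show ?thesis .
qed

lemma basis_axis: "b \<in> (Basis :: (real^'n) set) \<Longrightarrow> \<exists>i. b = axis i 1"
  by (auto simp: Basis_vec_def)

lemma unc_refl:
  fixes f :: "real^'n \<Rightarrow> real"
  assumes unc: "unconditional_density f" and b0: "b0 = axis i 1" and q: "q \<bullet> b0 = 0"
  shows "f (q + (- t) *\<^sub>R b0) = f (q + t *\<^sub>R b0)"
proof -
  define s where "s = (\<lambda>k. if k = i then -1 else (1::real))"
  have "\<forall>k. s k \<in> {-1, 1}" by (simp add: s_def)
  then have "f (\<chi> k. s k * (q + t *\<^sub>R b0) $ k) = f (q + t *\<^sub>R b0)"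
    using unc unfolding unconditional_density_def by blast
  moreover have "(\<chi> k. s k * (q + t *\<^sub>R b0) $ k) = q + (- t) *\<^sub>R b0"
  proof -
    have qi: "q $ i = 0" using q b0 by (simp add: cart_eq_inner_axis)
    show ?thesis using qi by (auto simp: vec_eq_iff s_def b0 axis_def)
  qed
  ultimately show ?thesis by simp
qed

lemma unc_mono:
  fixes f :: "real^'n \<Rightarrow> real"
  assumes unc: "unconditional_density f" and lc: "log_concave_fun f"
    and b0: "b0 \<in> Basis" and q: "q \<bullet> b0 = 0"
  shows "f (q + t *\<^sub>R b0) \<le> f q"
proof -
  obtain i where i: "b0 = axis i 1" using basis_axis[OF b0] by blast
  have fnn: "0 \<le> f x" for x using lc unfolding log_concave_fun_def by blast
  have "f (q + t *\<^sub>R b0) powr (1 - 1/2) * f (q + (- t) *\<^sub>R b0) powr (1/2)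
      \<le> f ((1 - 1/2) *\<^sub>R (q + t *\<^sub>R b0) + (1/2) *\<^sub>R (q + (- t) *\<^sub>R b0))"
  proof -
    have H: "\<forall>x y t. 0 < t \<and> t < 1 \<longrightarrow> f x powr (1 - t) * f y powr t \<le> f ((1 - t) *\<^sub>R x + t *\<^sub>R y)"
      using lc unfolding log_concave_fun_def by blast
    show ?thesis by (rule H[rule_format]) simp
  qed
  moreover have "(1 - 1/2) *\<^sub>R (q + t *\<^sub>R b0) + (1/2) *\<^sub>R (q + (- t) *\<^sub>R b0) = q"
    by (simp add: vec_eq_iff field_simps)
  moreover have "f (q + t *\<^sub>R b0) powr (1 - 1/2) * f (q + t *\<^sub>R b0) powr (1/2) = f (q + t *\<^sub>R b0)"
    by (rule powr_mix_eq[OF fnn])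
  ultimately show ?thesis using unc_refl[OF unc i] q i by simp
qed

lemma marg_b0:
  fixes f :: "real^'n \<Rightarrow> real"
  assumes pd: "prob_density f" and lc: "log_concave_fun f" and iso: "isotropic_density f"
    and unc: "unconditional_density f" and fc: "continuous_on UNIV f" and b0: "b0 \<in> Basis"
  shows "Gm f (Basis - {b0}) (\<lambda>_. 0) \<le> ennreal (1 / sqrt 2)"
proof -
  define J where "J = (Basis :: (real^'n) set) - {b0}"
  define m where "m t = Gm f J (\<lambda>_. t)" for t
  have fm[measurable]: "f \<in> borel_measurable borel" by (rule borel_measurable_continuous_onI[OF fc])
  have fnn: "0 \<le> f x" for x using pd unfolding prob_density_def by blast
  obtain i where i: "b0 = axis i 1" using basis_axis[OF b0] by blast
  have JB: "J \<subseteq> Basis" by (auto simp: J_def)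
  have lcm: "lc1 m"
    unfolding lc1_def
  proof (intro allI impI)
    fix a b l u v :: real
    assume "0 < l" "l < 1" "0 \<le> u" "0 \<le> v" "ennreal u \<le> m a" "ennreal v \<le> m b"
    then have "ennreal (u powr (1-l) * v powr l) \<le> Gm f J (\<lambda>c. (1-l) * (\<lambda>_. a) c + l * (\<lambda>_. b) c)"
      using prekopa[OF fc lc JB, unfolded lcE_def, rule_format, of l u v "\<lambda>_. a" "\<lambda>_. b"] unfolding m_def by simp
    then show "ennreal (u powr (1-l) * v powr l) \<le> m ((1-l) * a + l * b)" by (simp add: m_def)
  qed
  have qb: "Phi (\<lambda>b. if b \<in> J then z b else 0) \<bullet> b0 = 0" for z
    using b0 by (simp add: Phi_inner J_def)
  have line: "Phi (\<lambda>b. if b \<in> J then z b else t) = Phi (\<lambda>b. if b \<in> J then z b else 0) + t *\<^sub>R b0" for z t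
    unfolding J_def by (rule Phi_line[OF b0])
  have symm: "m (- t) = m t" for t
    unfolding m_def Gm_def
  proof (intro nn_integral_cong)
    fix z :: "real^'n \<Rightarrow> real"
    show "ennreal (f (Phi (\<lambda>b. if b \<in> J then z b else (\<lambda>_. - t) b))) = ennreal (f (Phi (\<lambda>b. if b \<in> J then z b else (\<lambda>_. t) b)))"
      using unc_refl[OF unc i qb[of z], of t] by (simp only: line[of z "- t"] line[of z t])
  qed
  have int_f: "(\<integral>\<^sup>+x. ennreal (f x) \<partial>lborel) = 1"
  proof -
    have "(\<integral>\<^sup>+x. ennreal (f x) \<partial>lborel) = (\<integral>\<^sup>+x. ennreal (f x) \<partial>lebesgue)"
      by (simp add: nn_integral_completion)
    also have "\<dots> = ennreal (integral\<^sup>L lebesgue f)"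
      using pd fnn unfolding prob_density_def by (intro nn_integral_eq_integral) auto
    also have "\<dots> = 1" using pd unfolding prob_density_def by simp
    finally show ?thesis .
  qed
  have int1: "(\<integral>\<^sup>+t. m t \<partial>lborel) = 1"
  proof -
    have "(\<integral>\<^sup>+x. ennreal (f x) \<partial>lborel) = (\<integral>\<^sup>+t. m t \<partial>lborel)"
      unfolding m_def Gm_def J_def by (rule fubini_line(2)[OF _ b0]) measurable
    then show ?thesis using int_f by simp
  qed
  have int2: "(\<integral>\<^sup>+t. ennreal (t\<^sup>2) * m t \<partial>lborel) = 1"
  proof -
    have isoi: "integrable lebesgue (\<lambda>x. x $ i * x $ i * f x)" "(LINT x|lebesgue. x $ i * x $ i * f x) = 1"
      using iso unfolding isotropic_density_def by auto
    have "(\<integral>\<^sup>+x. ennreal ((x \<bullet> b0)\<^sup>2 * f x) \<partial>lborel) = (\<integral>\<^sup>+x. ennreal (x $ i * x $ i * f x) \<partial>lebesgue)"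
      by (simp add: nn_integral_completion i cart_eq_inner_axis power2_eq_square)
    also have "\<dots> = 1"
      using isoi fnn by (subst nn_integral_eq_integral) auto
    finally have A: "(\<integral>\<^sup>+x. ennreal ((x \<bullet> b0)\<^sup>2 * f x) \<partial>lborel) = 1" .
    have "(\<integral>\<^sup>+x. ennreal ((x \<bullet> b0)\<^sup>2 * f x) \<partial>lborel) =
      (\<integral>\<^sup>+t. (\<integral>\<^sup>+z. ennreal ((Phi (\<lambda>b. if b \<in> J then z b else t) \<bullet> b0)\<^sup>2 * f (Phi (\<lambda>b. if b \<in> J then z b else t))) \<partial>PiM J (\<lambda>_. lborel)) \<partial>lborel)"
      unfolding J_def by (rule fubini_line(2)[OF _ b0]) measurable
    also have "\<dots> = (\<integral>\<^sup>+t. ennreal (t\<^sup>2) * m t \<partial>lborel)"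
    proof (rule nn_integral_cong)
      fix t :: real
      have pb: "Phi (\<lambda>b. if b \<in> J then z b else t) \<bullet> b0 = t" for z
        using b0 by (simp add: Phi_inner J_def)
      have "(\<integral>\<^sup>+z. ennreal ((Phi (\<lambda>b. if b \<in> J then z b else t) \<bullet> b0)\<^sup>2 * f (Phi (\<lambda>b. if b \<in> J then z b else t))) \<partial>PiM J (\<lambda>_. lborel))
         = (\<integral>\<^sup>+z. ennreal (t\<^sup>2) * ennreal (f (Phi (\<lambda>b. if b \<in> J then z b else t))) \<partial>PiM J (\<lambda>_. lborel))"
        using fnn by (intro nn_integral_cong) (simp add: pb ennreal_mult)
      also have "\<dots> = ennreal (t\<^sup>2) * m t"
        unfolding m_def Gm_def using meas_Gm_integrand[OF fc JB, of "\<lambda>_. t"]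
        by (simp add: nn_integral_cmult)
      finally show "(\<integral>\<^sup>+z. ennreal ((Phi (\<lambda>b. if b \<in> J then z b else t) \<bullet> b0)\<^sup>2 * f (Phi (\<lambda>b. if b \<in> J then z b else t))) \<partial>PiM J (\<lambda>_. lborel))
         = ennreal (t\<^sup>2) * m t" .
    qed
    finally show ?thesis using A by simp
  qed
  have "m 0 \<le> ennreal (1 / sqrt 2)" by (rule marg_bound[OF lcm symm int1 int2])
  then show ?thesis by (simp add: m_def J_def)
qed

definition boxext :: "'a::euclidean_space set \<Rightarrow> real \<Rightarrow> 'a set \<Rightarrow> 'a set" where
  "boxext A d S = {a + (\<Sum>b\<in>S. s b *\<^sub>R b) | a s. a \<in> A \<and> (\<forall>b\<in>S. \<bar>s b\<bar> \<le> d)}"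

lemma boxext_empty: "boxext A d {} = A"
  unfolding boxext_def by auto

lemma boxext_insert:
  assumes "finite S" "b \<notin> S"
  shows "boxext A d (insert b S) = slab (boxext A d S) b d"
proof (intro set_eqI iffI)
  fix x assume "x \<in> boxext A d (insert b S)"
  then obtain a s where x: "x = a + (\<Sum>b\<in>insert b S. s b *\<^sub>R b)" "a \<in> A" "\<forall>b'\<in>insert b S. \<bar>s b'\<bar> \<le> d"
    unfolding boxext_def by blast
  have "x = (a + (\<Sum>b\<in>S. s b *\<^sub>R b)) + s b *\<^sub>R b" using x(1) assms by (simp add: algebra_simps)
  moreover have "a + (\<Sum>b\<in>S. s b *\<^sub>R b) \<in> boxext A d S" unfolding boxext_def using x by blast
  moreover have "\<bar>s b\<bar> \<le> d" using x by simp
  ultimately show "x \<in> slab (boxext A d S) b d" unfolding slab_def by blast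
next
  fix x assume "x \<in> slab (boxext A d S) b d"
  then obtain c t where ct: "x = c + t *\<^sub>R b" "c \<in> boxext A d S" "\<bar>t\<bar> \<le> d" unfolding slab_def by blast
  then obtain a s where c: "c = a + (\<Sum>b\<in>S. s b *\<^sub>R b)" "a \<in> A" "\<forall>b\<in>S. \<bar>s b\<bar> \<le> d"
    unfolding boxext_def by blast
  define s' where "s' = s(b := t)"
  have "(\<Sum>b'\<in>insert b S. s' b' *\<^sub>R b') = t *\<^sub>R b + (\<Sum>b'\<in>S. s b' *\<^sub>R b')"
  proof -
    have "(\<Sum>b'\<in>S. s' b' *\<^sub>R b') = (\<Sum>b'\<in>S. s b' *\<^sub>R b')" using assms by (intro sum.cong) (auto simp: s'_def)
    then show ?thesis using assms by (simp add: s'_def)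
  qed
  then have "x = a + (\<Sum>b'\<in>insert b S. s' b' *\<^sub>R b')" using ct c by (simp add: algebra_simps)
  moreover have "\<forall>b'\<in>insert b S. \<bar>s' b'\<bar> \<le> d" using c ct by (auto simp: s'_def)
  ultimately show "x \<in> boxext A d (insert b S)" unfolding boxext_def using c by blast
qed

lemma boxext_closed_convex:
  assumes "finite S" "closed A" "convex A"
  shows "closed (boxext A d S) \<and> convex (boxext A d S)"
  using assms(1)
proof (induction S rule: finite_induct)
  case empty then show ?case using assms by (simp add: boxext_empty)
next
  case (insert b S) then show ?case by (simp add: boxext_insert closed_slab convex_slab)
qed

lemma boxext_sub: "0 \<le> d \<Longrightarrow> A \<subseteq> boxext A d S"
proof
  fix x assume "0 \<le> d" "x \<in> A"
  then show "x \<in> boxext A d S" unfolding boxext_def mem_Collect_eq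
    by (intro exI[of _ x] exI[of _ "\<lambda>_. 0"]) simp
qed

lemma boxext_ball:
  assumes "a \<in> A" "norm (y :: 'a::euclidean_space) \<le> d"
  shows "a + y \<in> boxext A d Basis"
proof -
  have "y = (\<Sum>b\<in>Basis. (y \<bullet> b) *\<^sub>R b)" by (simp add: euclidean_representation)
  moreover have "\<forall>b\<in>Basis. \<bar>y \<bullet> b\<bar> \<le> d" using assms(2) Basis_le_norm order_trans by blast
  ultimately show ?thesis unfolding boxext_def mem_Collect_eq using assms(1)
    by (intro exI[of _ a] exI[of _ "\<lambda>b. y \<bullet> b"]) simp
qed

lemma boxext_bound:
  fixes f :: "'a::euclidean_space \<Rightarrow> real"
  assumes fc: "continuous_on UNIV f" and f0: "\<And>x. 0 \<le> f x"
    and A: "closed A" "convex A" and d: "0 \<le> d"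
    and mono: "\<And>b0 q t. b0 \<in> Basis \<Longrightarrow> q \<bullet> b0 = 0 \<Longrightarrow> f (q + t *\<^sub>R b0) \<le> f q"
  shows "S \<subseteq> Basis \<Longrightarrow> (\<integral>\<^sup>+x. indicator (boxext A d S - A) x * ennreal (f x) \<partial>lborel)
     \<le> ennreal (2 * d) * (\<Sum>b\<in>S. Gm f (Basis - {b}) (\<lambda>_. 0))"
proof (induction S rule: infinite_finite_induct)
  case (infinite S)
  then show ?case using finite_subset[OF _ finite_Basis] by auto
next
  case empty
  then show ?case by (simp add: boxext_empty)
next
  case (insert b S)
  have fm[measurable]: "f \<in> borel_measurable borel" by (rule borel_measurable_continuous_onI[OF fc])
  define B where "B = boxext A d S"
  have Bcc: "closed B" "convex B" using boxext_closed_convex[OF insert(1) A] by (auto simp: B_def)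
  have B': "boxext A d (insert b S) = slab B b d" unfolding B_def by (rule boxext_insert[OF insert(1,2)])
  have AB: "A \<subseteq> B" unfolding B_def by (rule boxext_sub[OF d])
  have m1[measurable]: "slab B b d - B \<in> sets borel" using closed_slab[OF Bcc(1)] Bcc(1) by auto
  have m2[measurable]: "B - A \<in> sets borel" using Bcc(1) A(1) by auto
  have "(\<integral>\<^sup>+x. indicator (boxext A d (insert b S) - A) x * ennreal (f x) \<partial>lborel)
      \<le> (\<integral>\<^sup>+x. indicator (slab B b d - B) x * ennreal (f x) + indicator (B - A) x * ennreal (f x) \<partial>lborel)"
    unfolding B' using AB by (intro nn_integral_mono) (auto split: split_indicator)
  also have "\<dots> = (\<integral>\<^sup>+x. indicator (slab B b d - B) x * ennreal (f x) \<partial>lborel) + (\<integral>\<^sup>+x. indicator (B - A) x * ennreal (f x) \<partial>lborel)"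
    by (rule nn_integral_add) measurable
  also have "\<dots> \<le> ennreal (2 * d) * Gm f (Basis - {b}) (\<lambda>_. 0) + ennreal (2 * d) * (\<Sum>b\<in>S. Gm f (Basis - {b}) (\<lambda>_. 0))"
  proof (rule add_mono)
    show "(\<integral>\<^sup>+x. indicator (slab B b d - B) x * ennreal (f x) \<partial>lborel) \<le> ennreal (2 * d) * Gm f (Basis - {b}) (\<lambda>_. 0)"
      using insert(4) by (intro slab_bound[OF fc f0 _ Bcc d mono]) auto
    show "(\<integral>\<^sup>+x. indicator (B - A) x * ennreal (f x) \<partial>lborel) \<le> ennreal (2 * d) * (\<Sum>b\<in>S. Gm f (Basis - {b}) (\<lambda>_. 0))"
      using insert(3,4) unfolding B_def by auto
  qed
  also have "\<dots> = ennreal (2 * d) * (\<Sum>b\<in>insert b S. Gm f (Basis - {b}) (\<lambda>_. 0))"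
    using insert(1,2) by (simp add: distrib_left)
  finally show ?case .
qed

lemma main_bound:
  fixes f :: "real^'n \<Rightarrow> real"
  assumes pd: "prob_density f" and lc: "log_concave_fun f" and iso: "isotropic_density f"
    and unc: "unconditional_density f" and fc: "continuous_on UNIV f"
    and A: "convex A" and e: "0 < e"
  shows "measure (dens_measure f) (eps_nbhd A e - A) \<le> sqrt 2 * real CARD('n) * e"
proof -
  have fm[measurable]: "f \<in> borel_measurable borel" by (rule borel_measurable_continuous_onI[OF fc])
  have fnn: "0 \<le> f x" for x using pd unfolding prob_density_def by blast
  define Ac where "Ac = closure A"
  have Acc: "closed Ac" "convex Ac" using A by (auto simp: Ac_def convex_closure)
  define X where "X = boxext Ac e Basis - Ac"
  have Xb[measurable]: "X \<in> sets borel"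
    using boxext_closed_convex[OF finite_Basis Acc, of e] Acc unfolding X_def by auto
  have mono: "\<And>b0 q t. b0 \<in> Basis \<Longrightarrow> q \<bullet> b0 = 0 \<Longrightarrow> f (q + t *\<^sub>R b0) \<le> f q"
    using unc_mono[OF unc lc] by blast
  have "(\<integral>\<^sup>+x. indicator X x * ennreal (f x) \<partial>lborel) \<le> ennreal (2 * e) * (\<Sum>b\<in>Basis. Gm f (Basis - {b}) (\<lambda>_. 0))"
    unfolding X_def using e by (intro boxext_bound[OF fc fnn Acc _ mono]) auto
  also have "\<dots> \<le> ennreal (2 * e) * (\<Sum>b\<in>(Basis :: (real^'n) set). ennreal (1 / sqrt 2))"
    by (intro mult_left_mono sum_mono marg_b0[OF pd lc iso unc fc]) auto
  also have "\<dots> = ennreal (sqrt 2 * real CARD('n) * e)"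
  proof -
    have cB: "card (Basis :: (real^'n) set) = CARD('n)" using DIM_cart[where 'a=real and 'b='n] by simp
    have "(\<Sum>b\<in>(Basis :: (real^'n) set). ennreal (1 / sqrt 2)) = ennreal (real CARD('n) * (1 / sqrt 2))"
    proof -
      have "(\<Sum>b\<in>(Basis :: (real^'n) set). ennreal (1 / sqrt 2)) = of_nat (card (Basis :: (real^'n) set)) * ennreal (1 / sqrt 2)"
        by simp
      also have "\<dots> = ennreal (real CARD('n)) * ennreal (1 / sqrt 2)" by (simp add: cB ennreal_of_nat_eq_real_of_nat)
      also have "\<dots> = ennreal (real CARD('n) * (1 / sqrt 2))" by (rule ennreal_mult[symmetric]) auto
      finally show ?thesis .
    qed
    moreover have "ennreal (2 * e) * ennreal (real CARD('n) * (1 / sqrt 2)) = ennreal (2 * e * (real CARD('n) * (1 / sqrt 2)))"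
      using e by (intro ennreal_mult[symmetric]) auto
    moreover have "2 * e * (real CARD('n) * (1 / sqrt 2)) = sqrt 2 * real CARD('n) * e"
    proof -
      have "2 / sqrt 2 = sqrt 2" by (simp add: real_div_sqrt)
      then show ?thesis by (simp add: field_simps)
    qed
    ultimately show ?thesis by simp
  qed
  finally have nuX: "(\<integral>\<^sup>+x. indicator X x * ennreal (f x) \<partial>lborel) \<le> ennreal (sqrt 2 * real CARD('n) * e)" .
  have sX: "X \<in> sets lebesgue" using Xb by simp
  have flm: "(\<lambda>x. ennreal (f x)) \<in> borel_measurable lebesgue"
    by (rule measurable_completion) simp
  have muX: "emeasure (dens_measure f) X = (\<integral>\<^sup>+x. indicator X x * ennreal (f x) \<partial>lborel)"
  proof -
    have "emeasure (dens_measure f) X = (\<integral>\<^sup>+x. ennreal (f x) * indicator X x \<partial>lebesgue)"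
      unfolding dens_measure_def by (rule emeasure_density) (use sX flm in auto)
    also have "\<dots> = (\<integral>\<^sup>+x. indicator X x * ennreal (f x) \<partial>lborel)"
      by (simp add: nn_integral_completion mult.commute)
    finally show ?thesis .
  qed
  have nullF: "frontier A \<in> null_sets lebesgue"
    using negligible_convex_frontier[OF A] by (simp add: negligible_iff_null_sets)
  have muF: "emeasure (dens_measure f) (frontier A) = 0"
  proof -
    have "emeasure (dens_measure f) (frontier A) = (\<integral>\<^sup>+x. ennreal (f x) * indicator (frontier A) x \<partial>lebesgue)"
      unfolding dens_measure_def by (rule emeasure_density) (use nullF flm in auto)
    also have "\<dots> = 0"
    proof -
      have "AE x in lebesgue. ennreal (f x) * indicator (frontier A) x = 0"
        using AE_not_in[OF nullF] by (auto elim!: eventually_mono)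
      from nn_integral_cong_AE[OF this] show ?thesis by simp
    qed
    finally show ?thesis .
  qed
  have sub: "eps_nbhd A e - A \<subseteq> X \<union> frontier A"
  proof
    fix x assume "x \<in> eps_nbhd A e - A"
    then obtain a y where x: "x = a + y" "a \<in> A" "y \<in> cball 0 e" "x \<notin> A" unfolding eps_nbhd_def by blast
    have "a \<in> Ac" using x closure_subset unfolding Ac_def by blast
    then have "x \<in> boxext Ac e Basis" using x boxext_ball[of a Ac y e] by (simp add: dist_norm)
    moreover have "x \<in> Ac \<Longrightarrow> x \<in> frontier A"
      using x(4) interior_subset[of A] unfolding Ac_def frontier_def by blast
    ultimately show "x \<in> X \<union> frontier A" unfolding X_def by blast
  qed
  have "emeasure (dens_measure f) (eps_nbhd A e - A) \<le> emeasure (dens_measure f) (X \<union> frontier A)"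
    using sub sX nullF by (intro emeasure_mono) (auto simp: dens_measure_def)
  also have "\<dots> \<le> emeasure (dens_measure f) X + emeasure (dens_measure f) (frontier A)"
    using sX nullF by (intro emeasure_subadditive) (auto simp: dens_measure_def)
  also have "\<dots> \<le> ennreal (sqrt 2 * real CARD('n) * e)" using muX muF nuX by simp
  finally have "emeasure (dens_measure f) (eps_nbhd A e - A) \<le> ennreal (sqrt 2 * real CARD('n) * e)" .
  then show ?thesis unfolding measure_def using e by (intro enn2real_leI) auto
qed

theorem theorem5p7:
  fixes f :: "real^'n \<Rightarrow> real"
  assumes "prob_density f"
    and "log_concave_fun f"
    and "isotropic_density f"
    and "unconditional_density f"
    and "continuous_on UNIV f"
  shows "(\<forall>A e. convex A \<and> 0 < e \<longrightarrow>
            measure (dens_measure f) (eps_nbhd A e - A) \<le> sqrt 2 * real CARD('n) * e)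
       \<and> (\<forall>A. convex A \<longrightarrow> boundary_measure (dens_measure f) A \<le> ereal (sqrt 2 * real CARD('n)))
       \<and> Gamma_measure (dens_measure f) \<le> ereal (sqrt 2 * real CARD('n))"
proof -
  have P1: "measure (dens_measure f) (eps_nbhd A e - A) \<le> sqrt 2 * real CARD('n) * e"
    if "convex A" "0 < e" for A e
    using main_bound[OF assms that] .
  have P2: "boundary_measure (dens_measure f) A \<le> ereal (sqrt 2 * real CARD('n))" if A: "convex A" for A
  proof -
    have ev: "eventually (\<lambda>e. ereal (measure (dens_measure f) (eps_nbhd A e - A) / e) \<le> ereal (sqrt 2 * real CARD('n))) (at_right 0)"
      using eventually_at_right_less[of "0::real"]
    proof (rule eventually_mono)
      fix e :: real assume e: "0 < e"
      have "measure (dens_measure f) (eps_nbhd A e - A) / e \<le> sqrt 2 * real CARD('n)"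
        using P1[OF A e] e by (simp add: divide_le_eq)
      then show "ereal (measure (dens_measure f) (eps_nbhd A e - A) / e) \<le> ereal (sqrt 2 * real CARD('n))" by simp
    qed
    have "boundary_measure (dens_measure f) A \<le> Limsup (at_right 0) (\<lambda>e. ereal (measure (dens_measure f) (eps_nbhd A e - A) / e))"
      unfolding boundary_measure_def by (rule Liminf_le_Limsup) simp
    also have "\<dots> \<le> ereal (sqrt 2 * real CARD('n))" by (rule Limsup_bounded[OF ev])
    finally show ?thesis .
  qed
  have P3: "Gamma_measure (dens_measure f) \<le> ereal (sqrt 2 * real CARD('n))"
    unfolding Gamma_measure_def by (rule SUP_least) (auto simp: convex_body_def intro: P2)
  show ?thesis using P1 P2 P3 by blast
qed

end
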